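(* In the setting of the context with $2\le q<p+\nu$ and $\theta_2\in(0,1)$, suppose that for every $i\ge1$ the point $x_i$ is a minimizer of $x\mapsto\tilde f(x;\hat x_{i-1})+\frac{L^{\alpha}}{c_q\lambda_i^{1-\alpha}\theta_2^{\alpha}\varsigma}\|x-\hat x_{i-1}\|^{\varsigma}$ and that $\omega_i:=L\lambda_i\|x_i-\hat x_{i-1}\|^{p+\nu-q}\le\theta_2$. Then for every $k\ge1$, $$\sum_{i=1}^k\omega_i^{\frac{\varsigma}{p+\nu-q}}\Bigl(\frac{A_i^{p+\nu-1}}{(A_i-A_{i-1})^{p+\nu}}\Bigr)^{\frac{q}{p+\nu-q}}\le q\,\theta_2^{\alpha}\bigl(1-\theta_2^{\frac{q}{q-1}}\bigr)^{-1}\gamma^{-\frac{p+\nu}{p+\nu-q}}\Bigl(\frac{L}{c_q}\Bigr)^{\frac{q}{p+\nu-q}}h(x^*;x_0).$$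
   Context: Norm conventions: $\|\cdot\|$ a norm on $\mathbb{R}^d$, $\|u\|_*:=\max\{\langle u,x\rangle:\|x\|\le1\}$; for a symmetric $p$-linear form $T$, $\|T\|_*:=\max\{T[y_1,\dots,y_p]:\|y_j\|\le1\}$, $T[h]^i:=T[h,\dots,h]$; $(p,\nu,L)$-Hölder continuous derivatives means $\frac1{(p-1)!}\|\nabla^pg(x)-\nabla^pg(y)\|_*\le L\|x-y\|^\nu$ for all $x,y$; $\varphi$ is $(s,\sigma)$-uniformly convex if $\varphi(y)\ge\varphi(x)+\langle\zeta,y-x\rangle+\frac\sigma s\|y-x\|^s$ for all $y$, all $x$ with $\partial\varphi(x)\ne\emptyset$, all $\zeta\in\partial\varphi(x)$. Setting: $f=g+l$, $g:\mathbb{R}^d\to\mathbb{R}$ convex with $(p,\nu,L)$-Hölder continuous derivatives ($p\in\{1,2,\dots\}$, $\nu\in[0,1]$, $L>0$), $l$ proper closed convex, $x^*$ a minimizer of $f$. $\Phi_y(x):=g(y)+\sum_{i=1}^p\frac1{i!}\nabla^ig(y)[x-y]^i$, $\hat f(x;y):=g(y)+\langle\nabla g(y),x-y\rangle+l(x)$, $\tilde f(x;y):=\Phi_y(x)+l(x)$. $\gamma,\beta>0$ with $\frac1q\|\cdot\|^q$ $(q,\beta)$-uniformly convex; $c_q:=(\beta(q-1)^{1-q})^{1/q}$; $x_0\in\mathrm{dom}\,l$; $h(\cdot;x_0):\mathbb{R}^d\to\mathbb{R}$ convex, $h\ge0$, $h(x;x_0)=0$ iff $x=x_0$, $(q,\gamma)$-uniformly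 convex. $\alpha\in[0,1]$, $\varsigma:=\alpha(p+\nu)+(1-\alpha)q$. $a_i>0$, $A_0:=0$, $A_i:=A_{i-1}+a_i$, $\lambda_i:=\frac{a_i^q}{c_q\gamma A_i^{q-1}}$. Iterates: $z_0:=x_0$; for $i\ge1$, $\hat x_{i-1}:=\frac{a_i}{A_i}z_{i-1}+\frac{A_{i-1}}{A_i}x_{i-1}$, $x_i$ as in the claim, $z_i:=\operatorname{argmin}_x\{\sum_{j=1}^ia_j\hat f(x;x_j)+h(x;x_0)\}$. *)

theory Defs
  imports "HOL-Analysis.Analysis"
begin

definition is_norm :: "('a::real_vector \<Rightarrow> real) \<Rightarrow> bool" where
  "is_norm N \<longleftrightarrow> (\<forall>x. 0 \<le> N x) \<and> (\<forall>x. N x = 0 \<longleftrightarrow> x = 0)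
     \<and> (\<forall>c x. N (c *\<^sub>R x) = \<bar>c\<bar> * N x) \<and> (\<forall>x y. N (x + y) \<le> N x + N y)"

definition form_norm :: "('a \<Rightarrow> real) \<Rightarrow> nat \<Rightarrow> ('a list \<Rightarrow> real) \<Rightarrow> real" where
  "form_norm N p T = Sup {T ys | ys. length ys = p \<and> (\<forall>y\<in>set ys. N y \<le> 1)}"

definition multilinear_form :: "nat \<Rightarrow> ('a::real_vector list \<Rightarrow> real) \<Rightarrow> bool" where
  "multilinear_form p T \<longleftrightarrow>
     (\<forall>us vs. length us + length vs + 1 = p \<longrightarrow> linear (\<lambda>y. T (us @ y # vs)))"

text \<open>Dg i x is the i-th derivative of g at x, as an i-linear form:
  Dg 0 x [] = g x, and Dg (i+1) x (h # hs) is the derivative of Dg i \<cdot> hs at x in direction h.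
  g has (p,\<nu>,L)-Hoelder continuous derivatives.\<close>
definition holder_derivs ::
  "('a::euclidean_space \<Rightarrow> real) \<Rightarrow> nat \<Rightarrow> real \<Rightarrow> real
     \<Rightarrow> (nat \<Rightarrow> 'a \<Rightarrow> 'a list \<Rightarrow> real) \<Rightarrow> ('a \<Rightarrow> real) \<Rightarrow> bool" where
  "holder_derivs N p \<nu> L Dg g \<longleftrightarrow>
     (\<forall>x. Dg 0 x [] = g x)
   \<and> (\<forall>i\<le>p. \<forall>x. multilinear_form i (Dg i x))
   \<and> (\<forall>i<p. \<forall>x hs. length hs = i \<longrightarrow>
         ((\<lambda>y. Dg i y hs) has_derivative (\<lambda>h. Dg (Suc i) x (h # hs))) (at x))
   \<and> (\<forall>x y. form_norm N p (\<lambda>ys. Dg p x ys - Dg p y ys) / fact (p - 1)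
              \<le> L * N (x - y) powr \<nu>)"

definition unif_convex :: "('a::euclidean_space \<Rightarrow> real) \<Rightarrow> real \<Rightarrow> real \<Rightarrow> ('a \<Rightarrow> real) \<Rightarrow> bool" where
  "unif_convex N s \<sigma> \<phi> \<longleftrightarrow>
     (\<forall>x \<zeta>. (\<forall>y. \<phi> y \<ge> \<phi> x + \<zeta> \<bullet> (y - x)) \<longrightarrow>
        (\<forall>y. \<phi> y \<ge> \<phi> x + \<zeta> \<bullet> (y - x) + \<sigma> / s * N (y - x) powr s))"

definition proper_closed_convex :: "('a::euclidean_space \<Rightarrow> ereal) \<Rightarrow> bool" where
  "proper_closed_convex l \<longleftrightarrow> (\<forall>x. l x \<noteq> -\<infinity>) \<and> (\<exists>x. l x \<noteq> \<infinity>)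
     \<and> convex {(x, t::real). l x \<le> ereal t} \<and> closed {(x, t::real). l x \<le> ereal t}"

definition taylor_model :: "(nat \<Rightarrow> 'a::real_vector \<Rightarrow> 'a list \<Rightarrow> real) \<Rightarrow> nat \<Rightarrow> 'a \<Rightarrow> 'a \<Rightarrow> real" where
  "taylor_model Dg p y x = Dg 0 y [] + (\<Sum>i=1..p. Dg i y (replicate i (x - y)) / fact i)"

definition cq :: "real \<Rightarrow> real \<Rightarrow> real" where
  "cq \<beta> q = (\<beta> * (q - 1) powr (1 - q)) powr (1 / q)"

definition accA :: "(nat \<Rightarrow> real) \<Rightarrow> nat \<Rightarrow> real" where
  "accA a i = (\<Sum>j=1..i. a j)"

definition lam :: "real \<Rightarrow> real \<Rightarrow> real \<Rightarrow> (nat \<Rightarrow> real) \<Rightarrow> nat \<Rightarrow> real" where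
  "lam q \<gamma> \<beta> a i = a i powr q / (cq \<beta> q * \<gamma> * accA a i powr (q - 1))"

definition xhat :: "(nat \<Rightarrow> real) \<Rightarrow> (nat \<Rightarrow> 'a::real_vector) \<Rightarrow> (nat \<Rightarrow> 'a) \<Rightarrow> nat \<Rightarrow> 'a" where
  "xhat a x z i = (a (Suc i) / accA a (Suc i)) *\<^sub>R z i + (accA a i / accA a (Suc i)) *\<^sub>R x i"

definition varsigma :: "real \<Rightarrow> nat \<Rightarrow> real \<Rightarrow> real \<Rightarrow> real" where
  "varsigma \<alpha> p \<nu> q = \<alpha> * (real p + \<nu>) + (1 - \<alpha>) * q"

end

theory Submission
  imports Defs
begin

lemma subgradient_exists:
  fixes f :: "'a::euclidean_space \<Rightarrow> real"
  assumes cf: "convex_on UNIV f"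
  shows "\<exists>\<zeta>. \<forall>y. f y \<ge> f x + \<zeta> \<bullet> (y - x)"
proof -
  define S where "S = {(y - x, s - f x) | y s. f y < s}"
  have cS: "convex S"
    unfolding convex_alt S_def
  proof (safe)
    fix y1 s1 y2 s2 and u :: real
    assume h1: "f y1 < s1" and h2: "f y2 < s2" and u: "0 \<le> u" "u \<le> 1"
    have "f ((1 - u) *\<^sub>R y1 + u *\<^sub>R y2) \<le> (1 - u) * f y1 + u * f y2"
      using cf u by (auto simp: convex_on_def)
    also have "\<dots> \<le> (1 - u) * s1 + u * s2" 
      using h1 h2 u by (intro add_mono mult_left_mono) auto
    finally have le: "f ((1 - u) *\<^sub>R y1 + u *\<^sub>R y2) \<le> (1 - u) * s1 + u * s2" .
    have lt: "f ((1 - u) *\<^sub>R y1 + u *\<^sub>R y2) < (1 - u) * s1 + u * s2"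
    proof (cases "u = 0")
      case True then show ?thesis using h1 by simp
    next
      case False
      then have "u * f y2 < u * s2" using u h2 by auto
      moreover have "(1-u) * f y1 \<le> (1-u) * s1" using u h1 by (intro mult_left_mono) auto
      ultimately show ?thesis using cf u by (smt (verit) convex_onD UNIV_I)
    qed
    show "\<exists>y s. (1 - u) *\<^sub>R (y1 - x, s1 - f x) + u *\<^sub>R (y2 - x, s2 - f x) = (y - x, s - f x) \<and> f y < s"
      apply (rule exI[of _ "(1 - u) *\<^sub>R y1 + u *\<^sub>R y2"], rule exI[of _ "(1 - u) * s1 + u * s2"])
      using lt by (auto simp: algebra_simps)
  qed
  have "0 \<notin> S" unfolding S_def by (auto simp: zero_prod_def)
  then obtain c where c: "c \<noteq> 0" "\<forall>z\<in>S. 0 \<le> inner c z"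
    using separating_hyperplane_set_0[OF cS] by blast
  obtain a b where ab: "c = (a, b)" by (cases c)
  have key: "0 \<le> a \<bullet> (y - x) + b * (s - f x)" if "f y < s" for y s
    using c(2) that ab unfolding S_def by (auto simp: inner_Pair)
  have "0 \<le> b" using key[of x "f x + 1"] by simp
  moreover have "b \<noteq> 0"
  proof
    assume "b = 0"
    then have "0 \<le> a \<bullet> (x - a - x)" using key[of "x - a" "f (x - a) + 1"] by simp
    then have "a = 0" using inner_ge_zero[of a] by (simp del: inner_ge_zero)
    then show False using c ab \<open>b = 0\<close> by (simp add: zero_prod_def)
  qed
  ultimately have bp: "b > 0" by simp
  show ?thesis
  proof (rule exI[of _ "- (1/b) *\<^sub>R a"], intro allI)
    fix y
    have "\<forall>e>0. f x + (- (1/b) *\<^sub>R a) \<bullet> (y - x) \<le> f y + e"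
    proof (intro allI impI)
      fix e :: real assume "e > 0"
      then have "0 \<le> a \<bullet> (y - x) + b * (f y + e - f x)" using key[of y "f y + e"] by simp
      then have "0 \<le> (a \<bullet> (y - x) + b * (f y + e - f x)) / b" using bp by simp
      also have "\<dots> = (a \<bullet> (y - x)) / b + (f y + e - f x)" using bp by (simp add: field_simps)
      finally have "0 \<le> (a \<bullet> (y - x)) / b + (f y + e - f x)" .
      moreover have "(- (1/b) *\<^sub>R a) \<bullet> (y - x) = - ((a \<bullet> (y - x)) / b)" by simp
      ultimately show "f x + (- (1/b) *\<^sub>R a) \<bullet> (y - x) \<le> f y + e" by linarith
    qed
    then show "f x + (- (1/b) *\<^sub>R a) \<bullet> (y - x) \<le> f y"
      by (metis field_le_epsilon)
  qed
qed

lemma normN_basic: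
  assumes N: "is_norm N"
  shows "N 0 = 0" "\<And>x. N (- x) = N x" "\<And>x y. N (x - y) = N (y - x)"
    "\<And>x. 0 \<le> N x" "\<And>c x. N (c *\<^sub>R x) = \<bar>c\<bar> * N x" "\<And>x y. N (x + y) \<le> N x + N y"
    "\<And>x y. \<bar>N x - N y\<bar> \<le> N (x - y)"
proof -
  have h: "\<And>c x. N (c *\<^sub>R x) = \<bar>c\<bar> * N x" and t: "\<And>x y. N (x + y) \<le> N x + N y"
    and z: "\<And>x. N x = 0 \<longleftrightarrow> x = 0" and nn: "\<And>x. 0 \<le> N x"
    using N unfolding is_norm_def by auto
  show "N 0 = 0" using z by simp
  show neg: "\<And>x. N (- x) = N x" using h[of "-1"] by simp
  show "\<And>x y. N (x - y) = N (y - x)" by (metis neg minus_diff_eq)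
  show "\<And>x. 0 \<le> N x" by fact
  show "\<And>c x. N (c *\<^sub>R x) = \<bar>c\<bar> * N x" by fact
  show "\<And>x y. N (x + y) \<le> N x + N y" by fact
  show "\<And>x y. \<bar>N x - N y\<bar> \<le> N (x - y)"
  proof -
    fix x y
    have "N x \<le> N (x - y) + N y" using t[of "x - y" y] by simp
    moreover have "N y \<le> N (y - x) + N x" using t[of "y - x" x] by simp
    moreover have "N (y - x) = N (x - y)" by (metis neg minus_diff_eq)
    ultimately show "\<bar>N x - N y\<bar> \<le> N (x - y)" by linarith
  qed
qed

lemma normN_sum:
  assumes N: "is_norm N" and "finite A"
  shows "N (\<Sum>i\<in>A. f i) \<le> (\<Sum>i\<in>A. N (f i))"
  using assms(2)
proof (induction rule: finite_induct)
  case empty then show ?case by (simp add: normN_basic(1)[OF N])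
next
  case (insert b B) then show ?case
    using normN_basic(6)[OF N, of "f b" "sum f B"] by simp
qed

lemma normN_convex:
  assumes N: "is_norm N"
  shows "convex_on UNIV N"
proof (rule convex_onI)
  fix t :: real and x y :: 'a assume t: "0 < t" "t < 1"
  have "N ((1 - t) *\<^sub>R x + t *\<^sub>R y) \<le> N ((1 - t) *\<^sub>R x) + N (t *\<^sub>R y)"
    using normN_basic(6)[OF N] by blast
  also have "\<dots> = (1 - t) * N x + t * N y" using normN_basic(5)[OF N] t by simp
  finally show "N ((1 - t) *\<^sub>R x + t *\<^sub>R y) \<le> (1 - t) * N x + t * N y" .
qed auto

lemma normN_upper:
  fixes N :: "'a::euclidean_space \<Rightarrow> real"
  assumes N: "is_norm N"
  shows "\<exists>C>0. \<forall>x. N x \<le> C * norm x"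
proof -
  define C where "C = 1 + (\<Sum>b\<in>Basis. N b)"
  have Cp: "C > 0" unfolding C_def using normN_basic(4)[OF N] by (simp add: add_pos_nonneg sum_nonneg)
  have "N x \<le> C * norm x" for x
  proof -
    have "N x = N (\<Sum>b\<in>Basis. (x \<bullet> b) *\<^sub>R b)" by (simp add: euclidean_representation)
    also have "\<dots> \<le> (\<Sum>b\<in>Basis. N ((x \<bullet> b) *\<^sub>R b))"
      by (rule normN_sum[OF N]) simp
    also have "\<dots> = (\<Sum>b\<in>Basis. \<bar>x \<bullet> b\<bar> * N b)" by (simp add: normN_basic(5)[OF N])
    also have "\<dots> \<le> (\<Sum>b\<in>Basis. norm x * N b)"
      by (intro sum_mono mult_right_mono) (auto simp: Basis_le_norm normN_basic(4)[OF N])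
    also have "\<dots> \<le> C * norm x"
    proof -
      have "(\<Sum>b\<in>Basis. norm x * N b) = norm x * (\<Sum>b\<in>Basis. N b)" by (simp add: sum_distrib_left)
      then show ?thesis unfolding C_def by (simp add: algebra_simps)
    qed
    finally show ?thesis .
  qed
  then show ?thesis using Cp by blast
qed

lemma normN_cont:
  fixes N :: "'a::euclidean_space \<Rightarrow> real"
  assumes N: "is_norm N"
  shows "continuous_on UNIV N"
proof -
  obtain C where C: "C > 0" "\<forall>x. N x \<le> C * norm x" using normN_upper[OF N] by blast
  show ?thesis unfolding continuous_on_iff
  proof (intro ballI allI impI)
    fix x :: 'a and e :: real assume e: "e > 0"
    show "\<exists>d>0. \<forall>x'\<in>UNIV. dist x' x < d \<longrightarrow> dist (N x') (N x) < e"
    proof (intro exI[of _ "e / C"] conjI ballI impI)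
      fix y assume "dist y x < e / C"
      then have "C * norm (y - x) < e" using C by (simp add: dist_norm field_simps)
      moreover have "\<bar>N y - N x\<bar> \<le> N (y - x)" using normN_basic(7)[OF N] .
      ultimately show "dist (N y) (N x) < e" using C by (simp add: dist_real_def) (smt (verit))
    qed (use e C in auto)
  qed
qed

lemma normN_lower:
  fixes N :: "'a::euclidean_space \<Rightarrow> real"
  assumes N: "is_norm N"
  shows "\<exists>c>0. \<forall>x. c * norm x \<le> N x"
proof -
  have cpt: "compact (sphere (0::'a) 1)" by simp
  have "(SOME i. i \<in> Basis) \<in> sphere (0::'a) 1" by (simp add: SOME_Basis)
  then have ne: "sphere (0::'a) 1 \<noteq> {}" by blast
  obtain y where y: "y \<in> sphere 0 1" "\<forall>z\<in>sphere 0 1. N y \<le> N z"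
    using continuous_attains_inf[OF cpt ne continuous_on_subset[OF normN_cont[OF N]]] by blast
  have "y \<noteq> 0" using y by auto
  then have "N y \<noteq> 0" using N unfolding is_norm_def by blast
  then have yp: "N y > 0" using normN_basic(4)[OF N, of y] by linarith
  have "N y * norm x \<le> N x" for x
  proof (cases "x = 0")
    case True then show ?thesis by (simp add: normN_basic(1)[OF N])
  next
    case False
    then have "(1 / norm x) *\<^sub>R x \<in> sphere 0 1" by simp
    then have "N y \<le> N ((1 / norm x) *\<^sub>R x)" using y by blast
    also have "\<dots> = N x / norm x" using normN_basic(5)[OF N] by simp
    finally show ?thesis using False by (simp add: field_simps)
  qed
  then show ?thesis using yp by blast
qed

lemma multilinear_slot:
  assumes "multilinear_form p T" "length us + length vs + 1 = p"
  shows "linear (\<lambda>y. T (us @ y # vs))"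
  using assms unfolding multilinear_form_def by blast

lemma multilinear_scale:
  assumes ml: "multilinear_form p T"
  shows "length us + length ys = p \<Longrightarrow> length cs = length ys \<Longrightarrow>
    T (us @ map2 scaleR cs ys) = prod_list cs * T (us @ ys)"
proof (induction ys arbitrary: us cs)
  case Nil then show ?case by simp
next
  case (Cons y ys)
  then obtain c cs' where cs: "cs = c # cs'" by (cases cs) auto
  have lin: "linear (\<lambda>z. T (us @ z # map2 scaleR cs' ys))"
    using Cons.prems cs by (intro multilinear_slot[OF ml]) auto
  have "T (us @ map2 scaleR cs (y # ys)) = T (us @ (c *\<^sub>R y) # map2 scaleR cs' ys)" using cs by simp
  also have "\<dots> = c * T (us @ y # map2 scaleR cs' ys)" using linear_cmul[OF lin] by simp
  also have "\<dots> = c * T ((us @ [y]) @ map2 scaleR cs' ys)" by simp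
  also have "\<dots> = c * (prod_list cs' * T ((us @ [y]) @ ys))"
    using Cons.IH[of "us @ [y]" cs'] Cons.prems cs by simp
  finally show ?case using cs by simp
qed

lemma multilinear_scale0:
  assumes ml: "multilinear_form p T" "length ys = p" "length cs = p"
  shows "T (map2 scaleR cs ys) = prod_list cs * T ys"
  using multilinear_scale[OF ml(1), of "[]" ys cs] ml by simp

lemma multilinear_zero:
  assumes ml: "multilinear_form p T" "length ys = p" "0 \<in> set ys"
  shows "T ys = 0"
proof -
  define cs where "cs = map (\<lambda>y. if y = 0 then 0 else (1::real)) ys"
  have "map2 scaleR cs ys = ys" unfolding cs_def by (induction ys) auto
  moreover have "prod_list cs = 0" unfolding cs_def using ml(3)
    by (induction ys) auto
  ultimately show ?thesis using multilinear_scale0[OF ml(1,2), of cs] ml unfolding cs_def by simp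
qed

lemma multilinear_bound:
  fixes T :: "'a::euclidean_space list \<Rightarrow> real"
  shows "multilinear_form p T \<Longrightarrow> \<exists>B\<ge>0. \<forall>ys. length ys = p \<longrightarrow> \<bar>T ys\<bar> \<le> B * prod_list (map norm ys)"
proof (induction p arbitrary: T)
  case 0 then show ?case by (intro exI[of _ "\<bar>T []\<bar>"]) auto
next
  case (Suc p)
  have "\<forall>b\<in>Basis. \<exists>B\<ge>0. \<forall>ys. length ys = p \<longrightarrow> \<bar>T (b # ys)\<bar> \<le> B * prod_list (map norm ys)"
  proof
    fix b :: 'a
    have "multilinear_form p (\<lambda>ys. T (b # ys))"
      unfolding multilinear_form_def
    proof (intro allI impI)
      fix us vs :: "'a list" assume "length us + length vs + 1 = p"
      then show "linear (\<lambda>y. T (b # us @ y # vs))"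
        using multilinear_slot[OF Suc.prems, of "b # us" vs] by simp
    qed
    then show "\<exists>B\<ge>0. \<forall>ys. length ys = p \<longrightarrow> \<bar>T (b # ys)\<bar> \<le> B * prod_list (map norm ys)"
      using Suc.IH by blast
  qed
  from bchoice[OF this] obtain Bf where Bf0: "\<forall>b\<in>Basis. Bf b \<ge> 0 \<and> (\<forall>ys. length ys = p \<longrightarrow> \<bar>T (b # ys)\<bar> \<le> Bf b * prod_list (map norm ys))"
    by blast
  then have Bf: "\<And>b ys. b \<in> Basis \<Longrightarrow> length ys = p \<Longrightarrow> \<bar>T (b # ys)\<bar> \<le> Bf b * prod_list (map norm ys)"
    "\<And>b. b \<in> Basis \<Longrightarrow> Bf b \<ge> 0" by auto
  show ?case
  proof (intro exI[of _ "\<Sum>b\<in>Basis. Bf b"] conjI allI impI)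
    show "0 \<le> (\<Sum>b\<in>Basis. Bf b)" using Bf(2) by (simp add: sum_nonneg)
    fix ys :: "'a list" assume len: "length ys = Suc p"
    then obtain y zs where ys: "ys = y # zs" and lz: "length zs = p" by (cases ys) auto
    have lin: "linear (\<lambda>y. T ([] @ y # zs))" using multilinear_slot[OF Suc.prems, of "[]" zs] lz by simp
    have "T ys = T ((\<Sum>b\<in>Basis. (y \<bullet> b) *\<^sub>R b) # zs)" using ys by (simp add: euclidean_representation)
    also have "\<dots> = (\<Sum>b\<in>Basis. (y \<bullet> b) * T (b # zs))"
      using linear_sum[OF lin, of "\<lambda>b. (y \<bullet> b) *\<^sub>R b" Basis] linear_cmul[OF lin] by simp
    finally have eqT: "T ys = (\<Sum>b\<in>Basis. (y \<bullet> b) * T (b # zs))" .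
    have "\<bar>T ys\<bar> \<le> (\<Sum>b\<in>Basis. \<bar>(y \<bullet> b) * T (b # zs)\<bar>)" unfolding eqT by (rule sum_abs)
    also have "\<dots> = (\<Sum>b\<in>Basis. \<bar>y \<bullet> b\<bar> * \<bar>T (b # zs)\<bar>)" by (simp add: abs_mult)
    also have "\<dots> \<le> (\<Sum>b\<in>Basis. norm y * (Bf b * prod_list (map norm zs)))"
      by (intro sum_mono mult_mono) (auto simp: Basis_le_norm Bf lz)
    also have "\<dots> = (\<Sum>b\<in>Basis. Bf b * (norm y * prod_list (map norm zs)))"
      by (simp add: mult.commute mult.left_commute)
    also have "\<dots> = (\<Sum>b\<in>Basis. Bf b) * (norm y * prod_list (map norm zs))"
      by (rule sum_distrib_right[symmetric])
    also have "\<dots> = (\<Sum>b\<in>Basis. Bf b) * prod_list (map norm ys)" using ys by simp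
    finally show "\<bar>T ys\<bar> \<le> (\<Sum>b\<in>Basis. Bf b) * prod_list (map norm ys)" .
  qed
qed

lemma prod_list_le_pow:
  fixes f :: "'b \<Rightarrow> real"
  shows "(\<forall>y\<in>set ys. 0 \<le> f y \<and> f y \<le> c) \<longrightarrow> prod_list (map f ys) \<le> c ^ length ys"
proof (induction ys)
  case Nil then show ?case by simp
next
  case (Cons y ys)
  show ?case
  proof
    assume a: "\<forall>z\<in>set (y # ys). 0 \<le> f z \<and> f z \<le> c"
    have "prod_list (map f ys) \<le> c ^ length ys" using Cons.IH a by auto
    moreover have "0 \<le> prod_list (map f ys)" using a by (intro prod_list_nonneg) auto
    ultimately have "f y * prod_list (map f ys) \<le> c * c ^ length ys"
      using a by (intro mult_mono) auto
    then show "prod_list (map f (y # ys)) \<le> c ^ length (y # ys)" by simp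
  qed
qed

lemma form_bdd:
  fixes N :: "'a::euclidean_space \<Rightarrow> real"
  assumes N: "is_norm N" and ml: "multilinear_form p T"
  shows "bdd_above {T ys | ys. length ys = p \<and> (\<forall>y\<in>set ys. N y \<le> 1)}"
proof -
  obtain c where c: "c > 0" "\<forall>x. c * norm x \<le> N x" using normN_lower[OF N] by blast
  obtain B where B: "B \<ge> 0" "\<forall>ys. length ys = p \<longrightarrow> \<bar>T ys\<bar> \<le> B * prod_list (map norm ys)"
    using multilinear_bound[OF ml] by blast
  show ?thesis
  proof (rule bdd_aboveI[where M="B * (1 / c) ^ p"])
    fix x assume "x \<in> {T ys |ys. length ys = p \<and> (\<forall>y\<in>set ys. N y \<le> 1)}"
    then obtain ys where x: "x = T ys" and l: "length ys = p" and n: "\<forall>y\<in>set ys. N y \<le> 1" by blast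
    have "0 \<le> norm y \<and> norm y \<le> 1 / c" if "y \<in> set ys" for y
    proof -
      have "N y \<le> 1" using n that by blast
      then have "c * norm y \<le> 1" using c(2)[rule_format, of y] by linarith
      then show ?thesis using c(1) by (simp add: le_divide_eq mult.commute)
    qed
    then have "\<forall>y\<in>set ys. 0 \<le> norm y \<and> norm y \<le> 1 / c" by blast
    then have pl: "prod_list (map norm ys) \<le> (1 / c) ^ p" using prod_list_le_pow[of ys norm "1/c"] l by auto
    have "T ys \<le> B * prod_list (map norm ys)" using B(2)[rule_format, of ys] l abs_ge_self[of "T ys"] by linarith
    moreover have "B * prod_list (map norm ys) \<le> B * (1 / c) ^ p" using pl B(1) by (rule mult_left_mono)
    ultimately show "x \<le> B * (1 / c) ^ p" using x by linarith
  qed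
qed

lemma form_bound:
  fixes N :: "'a::euclidean_space \<Rightarrow> real"
  assumes N: "is_norm N" and ml: "multilinear_form p T" and l: "length ys = p"
  shows "T ys \<le> form_norm N p T * prod_list (map N ys)"
proof (cases "0 \<in> set ys")
  case True
  then have "T ys = 0" using multilinear_zero[OF ml l] by simp
  moreover have "prod_list (map N ys) = 0" using True normN_basic(1)[OF N]
    by (simp add: prod_list_zero_iff)
  ultimately show ?thesis by simp
next
  case False
  define zs where "zs = map (\<lambda>y. (1 / N y) *\<^sub>R y) ys"
  have Nne: "N y \<noteq> 0" if "y \<in> set ys" for y using False that N unfolding is_norm_def by auto
  have Npos: "\<And>y. y \<in> set ys \<Longrightarrow> N y > 0"
    using Nne normN_basic(4)[OF N] by (simp add: order_less_le)
  have eq: "N y *\<^sub>R ((1 / N y) *\<^sub>R y) = y" if "y \<in> set ys" for y using Npos[OF that] by simp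
  have "map2 scaleR (map N ys) zs = ys" unfolding zs_def using eq by (induction ys) auto
  then have "T ys = prod_list (map N ys) * T zs"
    using multilinear_scale0[OF ml, of zs "map N ys"] l unfolding zs_def by simp
  moreover have "T zs \<le> form_norm N p T"
    unfolding form_norm_def
  proof (rule cSup_upper[OF _ form_bdd[OF N ml]])
    have "\<forall>y\<in>set zs. N y \<le> 1" unfolding zs_def using Npos normN_basic(5)[OF N] by (auto simp: abs_of_pos)
    moreover have "length zs = p" using l unfolding zs_def by simp
    ultimately show "T zs \<in> {T ys |ys. length ys = p \<and> (\<forall>y\<in>set ys. N y \<le> 1)}" by blast
  qed
  moreover have "prod_list (map N ys) \<ge> 0" using normN_basic(4)[OF N] by (intro prod_list_nonneg) auto
  ultimately show ?thesis by (simp add: mult.commute mult_right_mono)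
qed

lemma form_bound_abs:
  fixes N :: "'a::euclidean_space \<Rightarrow> real"
  assumes N: "is_norm N" and ml: "multilinear_form p T" and l: "length ys = p" and p: "p \<ge> 1"
  shows "\<bar>T ys\<bar> \<le> form_norm N p T * prod_list (map N ys)"
proof -
  obtain y zs where ys: "ys = y # zs" using l p by (cases ys) auto
  have lin: "linear (\<lambda>u. T ([] @ u # zs))" using multilinear_slot[OF ml, of "[]" zs] l ys by simp
  have "- T ys = T ((- y) # zs)" using linear_neg[OF lin, of y] ys by simp
  also have "\<dots> \<le> form_norm N p T * prod_list (map N ((- y) # zs))" using form_bound[OF N ml, of "(-y) # zs"] l ys by simp
  also have "\<dots> = form_norm N p T * prod_list (map N ys)" using ys normN_basic(2)[OF N] by simp
  finally show ?thesis using form_bound[OF N ml l] by linarith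
qed

lemma line_deriv:
  fixes f :: "'a::real_normed_vector \<Rightarrow> real"
  assumes d: "(f has_derivative F) (at (x + s *\<^sub>R a))"
  shows "((\<lambda>s. f (x + s *\<^sub>R a)) has_real_derivative F a) (at s)"
proof -
  have lin: "linear F" using d by (simp add: has_derivative_linear)
  have "((\<lambda>s. x + s *\<^sub>R a) has_derivative (\<lambda>s. s *\<^sub>R a)) (at s)"
    by (auto intro!: derivative_eq_intros)
  from has_derivative_compose[OF this d] have "((\<lambda>s. f (x + s *\<^sub>R a)) has_derivative (\<lambda>h. F (h *\<^sub>R a))) (at s)" .
  moreover have "(\<lambda>h. F (h *\<^sub>R a)) = (*) (F a)" using linear_cmul[OF lin] by (auto simp: fun_eq_iff mult.commute)
  ultimately show ?thesis unfolding has_field_derivative_def by simp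
qed

lemma second_sym_aux:
  fixes f :: "'a::real_normed_vector \<Rightarrow> real"
  assumes d1: "\<And>y. (f has_derivative f' y) (at y)"
    and d2: "((\<lambda>y. f' y a) has_derivative (\<lambda>k. f'' k)) (at x)"
    and e: "e > 0"
  shows "\<exists>\<delta>>0. \<forall>t. 0 < t \<and> t < \<delta> \<longrightarrow>
     \<bar>(f (x + t *\<^sub>R a + t *\<^sub>R b) - f (x + t *\<^sub>R a) - f (x + t *\<^sub>R b) + f x) - t\<^sup>2 * f'' b\<bar>
       \<le> e * t\<^sup>2 * (2 * norm a + norm b)"
proof -
  have bl: "bounded_linear f''" using d2 by (simp add: has_derivative_bounded_linear)
  then have lin: "linear f''" by (simp add: bounded_linear.linear)
  have "\<forall>e>0. \<exists>d>0. \<forall>y. norm (y - x) < d \<longrightarrow> norm (f' y a - f' x a - f'' (y - x)) \<le> e * norm (y - x)"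
    using d2 unfolding has_derivative_at_alt by simp
  then obtain d where d: "d > 0" "\<forall>y. norm (y - x) < d \<longrightarrow> norm (f' y a - f' x a - f'' (y - x)) \<le> e * norm (y - x)"
    using e by blast
  define \<delta> where "\<delta> = d / (norm a + norm b + 1)"
  have Kp: "norm a + norm b + 1 > 0" by (simp add: add_nonneg_pos)
  have dp: "\<delta> > 0" unfolding \<delta>_def using d Kp by (simp add: divide_pos_pos)
  show ?thesis
  proof (intro exI[of _ \<delta>] conjI allI impI dp)
    fix t :: real assume t: "0 < t \<and> t < \<delta>"
    have tsm: "t * (norm a + norm b) < d"
    proof -
      have "t * (norm a + norm b) \<le> t * (norm a + norm b + 1)" using t by simp
      also have "\<dots> < \<delta> * (norm a + norm b + 1)" using t Kp by (intro mult_strict_right_mono) auto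
      also have "\<dots> = d" unfolding \<delta>_def using Kp by simp
      finally show ?thesis .
    qed
    define \<phi> where "\<phi> s = f (x + t *\<^sub>R b + s *\<^sub>R a) - f (x + s *\<^sub>R a)" for s
    have "\<forall>s. (\<phi> has_real_derivative (f' (x + t *\<^sub>R b + s *\<^sub>R a) a - f' (x + s *\<^sub>R a) a)) (at s)"
      unfolding \<phi>_def by (intro allI DERIV_diff line_deriv d1)
    then have "\<exists>z. 0 < z \<and> z < t \<and> \<phi> t - \<phi> 0 = (t - 0) * (f' (x + t *\<^sub>R b + z *\<^sub>R a) a - f' (x + z *\<^sub>R a) a)"
      using t by (intro MVT2[of 0 t \<phi> "\<lambda>s. f' (x + t *\<^sub>R b + s *\<^sub>R a) a - f' (x + s *\<^sub>R a) a"]) auto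
    then obtain \<sigma> where \<sigma>: "0 < \<sigma>" "\<sigma> < t"
      "\<phi> t - \<phi> 0 = (t - 0) * (f' (x + t *\<^sub>R b + \<sigma> *\<^sub>R a) a - f' (x + \<sigma> *\<^sub>R a) a)"
      by blast
    have \<Delta>: "f (x + t *\<^sub>R a + t *\<^sub>R b) - f (x + t *\<^sub>R a) - f (x + t *\<^sub>R b) + f x = \<phi> t - \<phi> 0"
      unfolding \<phi>_def by (simp add: algebra_simps)
    define y1 where "y1 = x + t *\<^sub>R b + \<sigma> *\<^sub>R a"
    define y2 where "y2 = x + \<sigma> *\<^sub>R a"
    have n1: "norm (y1 - x) \<le> t * (norm a + norm b)"
    proof -
      have "y1 - x = t *\<^sub>R b + \<sigma> *\<^sub>R a" unfolding y1_def by simp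
      then have "norm (y1 - x) \<le> norm (t *\<^sub>R b) + norm (\<sigma> *\<^sub>R a)" by (simp only: norm_triangle_ineq)
      also have "\<dots> \<le> t * norm b + t * norm a" using t \<sigma> by (simp add: mult_right_mono)
      finally show ?thesis by (simp add: algebra_simps)
    qed
    have n2: "norm (y2 - x) \<le> t * norm a" unfolding y2_def using t \<sigma> by (simp add: mult_right_mono)
    have e1: "\<bar>f' y1 a - f' x a - f'' (y1 - x)\<bar> \<le> e * (t * (norm a + norm b))"
    proof -
      have "\<bar>f' y1 a - f' x a - f'' (y1 - x)\<bar> \<le> e * norm (y1 - x)"
        using d(2)[rule_format, of y1] n1 tsm by simp
      also have "\<dots> \<le> e * (t * (norm a + norm b))" using n1 e by (intro mult_left_mono) auto
      finally show ?thesis .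
    qed
    have e2: "\<bar>f' y2 a - f' x a - f'' (y2 - x)\<bar> \<le> e * (t * norm a)"
    proof -
      have "t * norm a \<le> t * (norm a + norm b)" using t by (intro mult_left_mono) auto
      then have "norm (y2 - x) < d" using n2 tsm by linarith
      then have "\<bar>f' y2 a - f' x a - f'' (y2 - x)\<bar> \<le> e * norm (y2 - x)"
        using d(2)[rule_format, of y2] by simp
      also have "\<dots> \<le> e * (t * norm a)" using n2 e by (intro mult_left_mono) auto
      finally show ?thesis .
    qed
    have lf: "f'' (y1 - x) - f'' (y2 - x) = t * f'' b"
    proof -
      have "f'' (y1 - x) - f'' (y2 - x) = f'' ((y1 - x) - (y2 - x))" using linear_diff[OF lin] by simp
      also have "(y1 - x) - (y2 - x) = t *\<^sub>R b" unfolding y1_def y2_def by simp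
      finally show ?thesis using linear_cmul[OF lin] by simp
    qed
    have "\<bar>(f' y1 a - f' y2 a) - t * f'' b\<bar> \<le> e * (t * (norm a + norm b)) + e * (t * norm a)"
      using e1 e2 lf by linarith
    then have X: "t * \<bar>(f' y1 a - f' y2 a) - t * f'' b\<bar> \<le> t * (e * (t * (norm a + norm b)) + e * (t * norm a))"
      using t by (intro mult_left_mono) auto
    have "f (x + t *\<^sub>R a + t *\<^sub>R b) - f (x + t *\<^sub>R a) - f (x + t *\<^sub>R b) + f x = t * (f' y1 a - f' y2 a)"
      using \<Delta> \<sigma>(3) unfolding y1_def y2_def by simp
    then have "\<bar>(f (x + t *\<^sub>R a + t *\<^sub>R b) - f (x + t *\<^sub>R a) - f (x + t *\<^sub>R b) + f x) - t\<^sup>2 * f'' b\<bar>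
        = \<bar>t * ((f' y1 a - f' y2 a) - t * f'' b)\<bar>" by (simp add: power2_eq_square right_diff_distrib)
    also have "\<dots> = t * \<bar>(f' y1 a - f' y2 a) - t * f'' b\<bar>" using t by (simp add: abs_mult)
    also have "\<dots> \<le> t * (e * (t * (norm a + norm b)) + e * (t * norm a))" by (rule X)
    also have "\<dots> = e * t\<^sup>2 * (2 * norm a + norm b)" by (simp add: power2_eq_square algebra_simps)
    finally show "\<bar>(f (x + t *\<^sub>R a + t *\<^sub>R b) - f (x + t *\<^sub>R a) - f (x + t *\<^sub>R b) + f x) - t\<^sup>2 * f'' b\<bar>
       \<le> e * t\<^sup>2 * (2 * norm a + norm b)" .
  qed
qed

lemma second_sym:
  fixes f :: "'a::real_normed_vector \<Rightarrow> real"
  assumes d1: "\<And>y. (f has_derivative f' y) (at y)"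
    and d2: "\<And>h. ((\<lambda>y. f' y h) has_derivative (\<lambda>k. f'' k h)) (at x)"
  shows "f'' a b = f'' b a"
proof -
  have "\<bar>f'' b a - f'' a b\<bar> \<le> e * (3 * (norm a + norm b))" if e: "e > 0" for e
  proof -
    obtain d1' where D1: "d1' > 0" "\<forall>t. 0 < t \<and> t < d1' \<longrightarrow>
     \<bar>(f (x + t *\<^sub>R a + t *\<^sub>R b) - f (x + t *\<^sub>R a) - f (x + t *\<^sub>R b) + f x) - t\<^sup>2 * f'' b a\<bar>
       \<le> e * t\<^sup>2 * (2 * norm a + norm b)"
      using second_sym_aux[OF d1 d2 e, of a b] by blast
    obtain d2' where D2: "d2' > 0" "\<forall>t. 0 < t \<and> t < d2' \<longrightarrow>
     \<bar>(f (x + t *\<^sub>R b + t *\<^sub>R a) - f (x + t *\<^sub>R b) - f (x + t *\<^sub>R a) + f x) - t\<^sup>2 * f'' a b\<bar>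
       \<le> e * t\<^sup>2 * (2 * norm b + norm a)"
      using second_sym_aux[OF d1 d2 e, of b a] by blast
    define t where "t = min d1' d2' / 2"
    have t: "0 < t" "t < d1'" "t < d2'" unfolding t_def using D1 D2 by auto
    define \<Delta> where "\<Delta> = f (x + t *\<^sub>R a + t *\<^sub>R b) - f (x + t *\<^sub>R a) - f (x + t *\<^sub>R b) + f x"
    have eqx: "x + t *\<^sub>R b + t *\<^sub>R a = x + t *\<^sub>R a + t *\<^sub>R b" by (simp add: algebra_simps)
    have h1: "\<bar>\<Delta> - t\<^sup>2 * f'' b a\<bar> \<le> e * t\<^sup>2 * (2 * norm a + norm b)"
      using D1(2)[rule_format, of t] t unfolding \<Delta>_def by blast
    have "\<Delta> = f (x + t *\<^sub>R b + t *\<^sub>R a) - f (x + t *\<^sub>R b) - f (x + t *\<^sub>R a) + f x"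
      unfolding \<Delta>_def eqx by simp
    then have h2: "\<bar>\<Delta> - t\<^sup>2 * f'' a b\<bar> \<le> e * t\<^sup>2 * (2 * norm b + norm a)"
      using D2(2)[rule_format, of t] t by simp
    have "t\<^sup>2 * f'' b a - t\<^sup>2 * f'' a b = (\<Delta> - t\<^sup>2 * f'' a b) - (\<Delta> - t\<^sup>2 * f'' b a)" by simp
    then have "\<bar>t\<^sup>2 * f'' b a - t\<^sup>2 * f'' a b\<bar> \<le> \<bar>\<Delta> - t\<^sup>2 * f'' a b\<bar> + \<bar>\<Delta> - t\<^sup>2 * f'' b a\<bar>"
      by (metis abs_triangle_ineq4)
    then have "\<bar>t\<^sup>2 * f'' b a - t\<^sup>2 * f'' a b\<bar> \<le> e * t\<^sup>2 * (2 * norm a + norm b) + e * t\<^sup>2 * (2 * norm b + norm a)"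
      using h1 h2 by linarith
    also have "\<dots> = t\<^sup>2 * (e * (3 * (norm a + norm b)))" by (simp add: algebra_simps)
    finally have "t\<^sup>2 * \<bar>f'' b a - f'' a b\<bar> \<le> t\<^sup>2 * (e * (3 * (norm a + norm b)))"
      by (simp add: abs_mult right_diff_distrib[symmetric])
    then show ?thesis using t by simp
  qed
  note main = this
  define K where "K = 3 * (norm a + norm b)"
  have K0: "K \<ge> 0" unfolding K_def by simp
  have "\<bar>f'' b a - f'' a b\<bar> \<le> 0 + e" if e: "e > 0" for e
  proof -
    have pos: "e / (K + 1) > 0" using e K0 by (intro divide_pos_pos) auto
    have "\<bar>f'' b a - f'' a b\<bar> \<le> e / (K + 1) * K" using main[OF pos] unfolding K_def .
    also have "\<dots> \<le> e / (K + 1) * (K + 1)" using e K0 by (intro mult_left_mono) auto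
    also have "\<dots> = e" using K0 by simp
    finally show ?thesis by simp
  qed
  then have "\<bar>f'' b a - f'' a b\<bar> \<le> 0" by (rule field_le_epsilon)
  then show ?thesis by simp
qed

lemma hd_facts:
  assumes "holder_derivs N p \<nu> L Dg g"
  shows "\<And>x. Dg 0 x [] = g x"
    "\<And>i x. i \<le> p \<Longrightarrow> multilinear_form i (Dg i x)"
    "\<And>i x hs. i < p \<Longrightarrow> length hs = i \<Longrightarrow>
         ((\<lambda>y. Dg i y hs) has_derivative (\<lambda>h. Dg (Suc i) x (h # hs))) (at x)"
    "\<And>x y. form_norm N p (\<lambda>ys. Dg p x ys - Dg p y ys) / fact (p - 1) \<le> L * N (x - y) powr \<nu>"
  using assms unfolding holder_derivs_def by blast+

lemma Dg_swap:
  assumes hd: "holder_derivs N p \<nu> L Dg g"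
  shows "i \<le> p \<Longrightarrow> length us + length vs + 2 = i \<Longrightarrow>
    Dg i x (us @ a # b # vs) = Dg i x (us @ b # a # vs)"
proof (induction us arbitrary: i x)
  case Nil
  then obtain m where i: "i = Suc (Suc m)" and lv: "length vs = m" by auto
  have d1: "\<And>y. ((\<lambda>y. Dg m y vs) has_derivative (\<lambda>h. Dg (Suc m) y (h # vs))) (at y)"
    using hd_facts(3)[OF hd, of m vs] Nil lv i by simp
  have d2: "\<And>h. ((\<lambda>y. Dg (Suc m) y (h # vs)) has_derivative (\<lambda>k. Dg (Suc (Suc m)) x (k # h # vs))) (at x)"
    using hd_facts(3)[OF hd, of "Suc m" "h # vs" for h] Nil lv i by simp
  show ?case using second_sym[OF d1 d2, of a b] i by simp
next
  case (Cons c us)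
  then obtain j where i: "i = Suc j" by (cases i) auto
  have eq: "(\<lambda>y. Dg j y (us @ a # b # vs)) = (\<lambda>y. Dg j y (us @ b # a # vs))"
    using Cons.IH[of j] Cons.prems i by auto
  have "((\<lambda>y. Dg j y (us @ a # b # vs)) has_derivative (\<lambda>h. Dg (Suc j) x (h # us @ a # b # vs))) (at x)"
    using hd_facts(3)[OF hd, of j "us @ a # b # vs" x] Cons.prems i by simp
  moreover have "((\<lambda>y. Dg j y (us @ a # b # vs)) has_derivative (\<lambda>h. Dg (Suc j) x (h # us @ b # a # vs))) (at x)"
    using hd_facts(3)[OF hd, of j "us @ b # a # vs" x] Cons.prems i eq by simp
  ultimately have "(\<lambda>h. Dg (Suc j) x (h # us @ a # b # vs)) = (\<lambda>h. Dg (Suc j) x (h # us @ b # a # vs))"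
    by (rule has_derivative_unique)
  then show ?case using i by (metis append_Cons)
qed

lemma Dg_move_last:
  assumes hd: "holder_derivs N p \<nu> L Dg g"
  shows "i \<le> p \<Longrightarrow> j + m + 1 = i \<Longrightarrow>
    Dg i x (replicate j w @ v # replicate m w) = Dg i x (replicate (j + m) w @ [v])"
proof (induction m arbitrary: j)
  case 0 then show ?case by simp
next
  case (Suc m)
  have "Dg i x (replicate j w @ v # replicate (Suc m) w) = Dg i x (replicate j w @ v # w # replicate m w)" by simp
  also have "\<dots> = Dg i x (replicate j w @ w # v # replicate m w)"
    using Dg_swap[OF hd, of i "replicate j w" "replicate m w" x v w] Suc.prems by simp
  also have "\<dots> = Dg i x (replicate (Suc j) w @ v # replicate m w)" by (simp add: replicate_app_Cons_same)
  also have "\<dots> = Dg i x (replicate (Suc j + m) w @ [v])" using Suc.IH[of "Suc j"] Suc.prems by simp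
  finally show ?case by simp
qed

lemma multilinear_line_deriv:
  assumes ml: "multilinear_form n T"
  shows "length us + k = n \<Longrightarrow>
    ((\<lambda>t. T (us @ replicate k (w + t *\<^sub>R v))) has_real_derivative
      (\<Sum>j<k. T (us @ replicate j w @ v # replicate (k - 1 - j) w))) (at 0)"
proof (induction k arbitrary: us)
  case 0 then show ?case by simp
next
  case (Suc k)
  have lin: "\<And>t. linear (\<lambda>y. T (us @ y # replicate k (w + t *\<^sub>R v)))"
    using Suc.prems by (intro multilinear_slot[OF ml]) auto
  have split: "T (us @ replicate (Suc k) (w + t *\<^sub>R v)) =
      T ((us @ [w]) @ replicate k (w + t *\<^sub>R v)) + t * T ((us @ [v]) @ replicate k (w + t *\<^sub>R v))" for t
    using linear_add[OF lin[of t], of w "t *\<^sub>R v"] linear_cmul[OF lin[of t], of t v] by simp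
  have D1: "((\<lambda>t. T ((us @ [w]) @ replicate k (w + t *\<^sub>R v))) has_real_derivative
      (\<Sum>j<k. T ((us @ [w]) @ replicate j w @ v # replicate (k - 1 - j) w))) (at 0)"
    using Suc.IH[of "us @ [w]"] Suc.prems by simp
  have D2: "((\<lambda>t. T ((us @ [v]) @ replicate k (w + t *\<^sub>R v))) has_real_derivative
      (\<Sum>j<k. T ((us @ [v]) @ replicate j w @ v # replicate (k - 1 - j) w))) (at 0)"
    using Suc.IH[of "us @ [v]"] Suc.prems by simp
  have D3: "((\<lambda>t. t * T ((us @ [v]) @ replicate k (w + t *\<^sub>R v))) has_real_derivative
      T (us @ v # replicate k w)) (at 0)"
    by (rule DERIV_cong[OF DERIV_mult[OF DERIV_ident D2]]) simp
  have "((\<lambda>t. T (us @ replicate (Suc k) (w + t *\<^sub>R v))) has_real_derivative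
      ((\<Sum>j<k. T ((us @ [w]) @ replicate j w @ v # replicate (k - 1 - j) w)) + T (us @ v # replicate k w))) (at 0)"
    unfolding split using DERIV_add[OF D1 D3] by simp
  moreover have "(\<Sum>j<Suc k. T (us @ replicate j w @ v # replicate (Suc k - 1 - j) w)) =
     (\<Sum>j<k. T ((us @ [w]) @ replicate j w @ v # replicate (k - 1 - j) w)) + T (us @ v # replicate k w)"
    by (subst sum.lessThan_Suc_shift) (simp add: replicate_app_Cons_same)
  ultimately show ?case by simp
qed

lemma taylor_deriv:
  assumes hd: "holder_derivs N p \<nu> L Dg g"
  shows "((\<lambda>t. taylor_model Dg p yh (xk + t *\<^sub>R v)) has_real_derivative
     (\<Sum>m<p. Dg (Suc m) yh (replicate m (xk - yh) @ [v]) / fact m)) (at 0)"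
proof -
  define w where "w = xk - yh"
  have eqf: "taylor_model Dg p yh (xk + t *\<^sub>R v) =
     Dg 0 yh [] + (\<Sum>i=1..p. Dg i yh (replicate i (w + t *\<^sub>R v)) / fact i)" for t
    unfolding taylor_model_def w_def by (simp add: algebra_simps)
  have Di: "((\<lambda>t. Dg i yh (replicate i (w + t *\<^sub>R v)) / fact i) has_real_derivative
       (of_nat i * Dg i yh (replicate (i - 1) w @ [v])) / fact i) (at 0)" if i: "i \<in> {1..p}" for i
  proof -
    have "((\<lambda>t. Dg i yh ([] @ replicate i (w + t *\<^sub>R v))) has_real_derivative
      (\<Sum>j<i. Dg i yh ([] @ replicate j w @ v # replicate (i - 1 - j) w))) (at 0)"
      using multilinear_line_deriv[OF hd_facts(2)[OF hd, of i yh], of "[]" i w v] i by simp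
    moreover have "(\<Sum>j<i. Dg i yh ([] @ replicate j w @ v # replicate (i - 1 - j) w)) =
        (\<Sum>j<i. Dg i yh (replicate (i - 1) w @ [v]))"
    proof (rule sum.cong[OF refl])
      fix j assume "j \<in> {..<i}"
      then show "Dg i yh ([] @ replicate j w @ v # replicate (i - 1 - j) w) = Dg i yh (replicate (i - 1) w @ [v])"
        using Dg_move_last[OF hd, of i j "i - 1 - j" yh w v] i by simp
    qed
    ultimately show ?thesis by (intro DERIV_cdivide) simp
  qed
  have "((\<lambda>t. taylor_model Dg p yh (xk + t *\<^sub>R v)) has_real_derivative
      0 + (\<Sum>i=1..p. (of_nat i * Dg i yh (replicate (i - 1) w @ [v])) / fact i)) (at 0)"
    unfolding eqf by (intro DERIV_add DERIV_const DERIV_sum Di)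
  moreover have "(\<Sum>i=1..p. (of_nat i * Dg i yh (replicate (i - 1) w @ [v])) / fact i) =
      (\<Sum>m<p. Dg (Suc m) yh (replicate m w @ [v]) / fact m)"
  proof -
    define F where "F i = (of_nat i * Dg i yh (replicate (i - 1) w @ [v])) / fact i" for i
    have "(\<Sum>i=1..p. F i) = (\<Sum>i\<in>Suc ` {..<p}. F i)" by (simp add: image_Suc_lessThan)
    also have "\<dots> = (\<Sum>m<p. F (Suc m))" by (subst sum.reindex) auto
    finally have "(\<Sum>i=1..p. (of_nat i * Dg i yh (replicate (i - 1) w @ [v])) / fact i) =
        (\<Sum>m<p. (of_nat (Suc m) * Dg (Suc m) yh (replicate m w @ [v])) / fact (Suc m))"
      unfolding F_def by simp
    also have "\<dots> = (\<Sum>m<p. Dg (Suc m) yh (replicate m w @ [v]) / fact m)"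
    proof (intro sum.cong refl)
      fix m assume "m \<in> {..<p}"
      have "real (Suc m) * Dg (Suc m) yh (replicate m w @ [v]) / fact (Suc m) =
          (real (Suc m) * Dg (Suc m) yh (replicate m w @ [v])) / (real (Suc m) * fact m)"
        by (simp only: fact_Suc of_nat_mult)
      also have "\<dots> = Dg (Suc m) yh (replicate m w @ [v]) / fact m"
        by (rule mult_divide_mult_cancel_left) simp
      finally show "of_nat (Suc m) * Dg (Suc m) yh (replicate m w @ [v]) / fact (Suc m) = Dg (Suc m) yh (replicate m w @ [v]) / fact m"
        by simp
    qed
    finally show ?thesis .
  qed
  ultimately show ?thesis unfolding w_def by simp
qed

lemma taylor_err:
  fixes N :: "'a::euclidean_space \<Rightarrow> real"
  assumes hd: "holder_derivs N p \<nu> L Dg g" and N: "is_norm N" and p: "p \<ge> 1" and nu: "\<nu> \<ge> 0"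
    and L0: "L \<ge> 0"
  shows "\<bar>Dg 1 (yh + w) [v] - (\<Sum>m<p. Dg (Suc m) yh (replicate m w @ [v]) / fact m)\<bar>
     \<le> L * N w powr \<nu> * N w ^ (p - 1) * N v"
proof -
  define diff where "diff m s = Dg (Suc m) (yh + s *\<^sub>R w) (replicate m w @ [v])" for m s
  have rep: "\<exists>t. 0 \<le> t \<and> t \<le> 1 \<and> Dg 1 (yh + w) [v] - (\<Sum>m<p. diff m 0 / fact m) =
      (diff (p - 1) t - diff (p - 1) 0) / fact (p - 1)"
  proof (cases "p = 1")
    case True then show ?thesis by (intro exI[of _ 1]) (simp add: diff_def)
  next
    case False
    then have p2: "0 < p - 1" using p by simp
    have ds: "\<forall>m t. m < p - 1 \<and> 0 \<le> t \<and> t \<le> 1 \<longrightarrow> DERIV (diff m) t :> diff (Suc m) t"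
    proof (intro allI impI)
      fix m and t :: real assume m: "m < p - 1 \<and> 0 \<le> t \<and> t \<le> 1"
      have "((\<lambda>y. Dg (Suc m) y (replicate m w @ [v])) has_derivative
          (\<lambda>h. Dg (Suc (Suc m)) (yh + t *\<^sub>R w) (h # replicate m w @ [v]))) (at (yh + t *\<^sub>R w))"
      proof -
        have "Suc m < p" using m by arith
        then show ?thesis using hd_facts(3)[OF hd, of "Suc m" "replicate m w @ [v]" "yh + t *\<^sub>R w"] by simp
      qed
      from line_deriv[OF this] show "DERIV (diff m) t :> diff (Suc m) t"
        unfolding diff_def by (simp add: replicate_app_Cons_same)
    qed
    obtain t where t: "0 < t" "t < 1"
      "diff 0 1 = (\<Sum>m<p - 1. diff m 0 / fact m * 1 ^ m) + diff (p - 1) t / fact (p - 1) * 1 ^ (p - 1)"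
      using Maclaurin[OF zero_less_one p2 refl ds] by blast
    have pS: "p = Suc (p - 1)" using p by simp
    have "(\<Sum>m<p. diff m 0 / fact m) = (\<Sum>m<p - 1. diff m 0 / fact m) + diff (p - 1) 0 / fact (p - 1)"
      by (subst pS) (simp only: sum.lessThan_Suc diff_Suc_1)
    moreover have "diff 0 1 = Dg 1 (yh + w) [v]" unfolding diff_def by simp
    ultimately show ?thesis using t by (intro exI[of _ t]) (simp add: diff_divide_distrib)
  qed
  then obtain t where t: "0 \<le> t" "t \<le> 1" and eq: "Dg 1 (yh + w) [v] - (\<Sum>m<p. diff m 0 / fact m) =
      (diff (p - 1) t - diff (p - 1) 0) / fact (p - 1)" by blast
  define T where "T ys = Dg p (yh + t *\<^sub>R w) ys - Dg p yh ys" for ys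
  have mlT: "multilinear_form p T"
    unfolding multilinear_form_def T_def
  proof (intro allI impI)
    fix us vs :: "'a list" assume l: "length us + length vs + 1 = p"
    show "linear (\<lambda>y. Dg p (yh + t *\<^sub>R w) (us @ y # vs) - Dg p yh (us @ y # vs))"
      using multilinear_slot[OF hd_facts(2)[OF hd, of p] l] by (intro linear_compose_sub) auto
  qed
  have "diff (p - 1) t - diff (p - 1) 0 = T (replicate (p - 1) w @ [v])"
    unfolding diff_def T_def using p by simp
  also have "\<bar>\<dots>\<bar> \<le> form_norm N p T * prod_list (map N (replicate (p - 1) w @ [v]))"
    using form_bound_abs[OF N mlT _ p, of "replicate (p - 1) w @ [v]"] p by simp
  also have "\<dots> = form_norm N p T * (N w ^ (p - 1) * N v)" by (simp add: prod_list_replicate)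
  finally have b1: "\<bar>diff (p - 1) t - diff (p - 1) 0\<bar> \<le> form_norm N p T * (N w ^ (p - 1) * N v)" .
  have b2a: "form_norm N p T / fact (p - 1) \<le> L * N (yh + t *\<^sub>R w - yh) powr \<nu>"
    using hd_facts(4)[OF hd, of "yh + t *\<^sub>R w" yh] unfolding T_def .
  have "N (yh + t *\<^sub>R w - yh) = t * N w" using normN_basic(5)[OF N] t by simp
  moreover have "(t * N w) powr \<nu> \<le> N w powr \<nu>"
    using t nu normN_basic(4)[OF N, of w] by (intro powr_mono2) (auto simp: mult_left_le_one_le)
  ultimately have "L * N (yh + t *\<^sub>R w - yh) powr \<nu> \<le> L * N w powr \<nu>"
    using L0 by (intro mult_left_mono) auto
  with b2a have b2b: "form_norm N p T / fact (p - 1) \<le> L * N w powr \<nu>" by linarith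
  have b2: "form_norm N p T \<le> fact (p - 1) * (L * N w powr \<nu>)"
    using b2b by (simp add: divide_le_eq mult.commute)
  have nn: "0 \<le> N w ^ (p - 1) * N v" using normN_basic(4)[OF N] by simp
  have "\<bar>Dg 1 (yh + w) [v] - (\<Sum>m<p. diff m 0 / fact m)\<bar> = \<bar>diff (p - 1) t - diff (p - 1) 0\<bar> / fact (p - 1)"
    using eq by simp
  also have "\<dots> \<le> fact (p - 1) * (L * N w powr \<nu>) * (N w ^ (p - 1) * N v) / fact (p - 1)"
  proof (rule divide_right_mono)
    have "form_norm N p T * (N w ^ (p - 1) * N v) \<le> fact (p - 1) * (L * N w powr \<nu>) * (N w ^ (p - 1) * N v)"
      using b2 nn by (rule mult_right_mono)
    then show "\<bar>diff (p - 1) t - diff (p - 1) 0\<bar> \<le> fact (p - 1) * (L * N w powr \<nu>) * (N w ^ (p - 1) * N v)"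
      using b1 by linarith
  qed simp
  also have "\<dots> = L * N w powr \<nu> * N w ^ (p - 1) * N v" by simp
  finally show ?thesis unfolding diff_def by simp
qed

lemma young_step:
  fixes \<beta> q \<theta> d n :: real
  assumes b: "\<beta> > 0" and q: "q > 1" and th: "\<theta> \<ge> 0" and d: "d \<ge> 0" and n: "n \<ge> 0"
  shows "cq \<beta> q * \<theta> * d powr (q - 1) * n \<le> \<beta> * n powr q / q + \<theta> powr (q / (q - 1)) * d powr q / q"
proof -
  define q' where "q' = q / (q - 1)"
  have q'1: "q' > 1" unfolding q'_def using q by (simp add: field_simps)
  have conj: "1 / q + 1 / q' = 1" unfolding q'_def using q by (simp add: field_simps)
  define A where "A = \<beta> powr (1 / q) * n"
  define B where "B = cq \<beta> q * \<theta> * d powr (q - 1) * \<beta> powr (- 1 / q)"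
  have A0: "A \<ge> 0" unfolding A_def using n by simp
  have cq0: "cq \<beta> q > 0" unfolding cq_def using b q by simp
  have B0: "B \<ge> 0" unfolding B_def using cq0 th by simp
  have AB: "A * B = cq \<beta> q * \<theta> * d powr (q - 1) * n"
  proof -
    have "\<beta> powr (1 / q) * \<beta> powr (- 1 / q) = 1" using b by (simp add: powr_add[symmetric])
    then show ?thesis unfolding A_def B_def by (simp add: algebra_simps)
  qed
  have Aq: "A powr q = \<beta> * n powr q"
    unfolding A_def using b n q by (simp add: powr_mult powr_powr)
  have cqq': "cq \<beta> q powr q' = \<beta> powr (1 / (q - 1)) / (q - 1)"
  proof -
    have "cq \<beta> q powr q' = (\<beta> * (q - 1) powr (1 - q)) powr (1 / q * q')"
      unfolding cq_def using b q by (simp add: powr_powr)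
    also have "1 / q * q' = 1 / (q - 1)" unfolding q'_def using q by simp
    also have "(\<beta> * (q - 1) powr (1 - q)) powr (1 / (q - 1)) = \<beta> powr (1 / (q - 1)) * (q - 1) powr ((1 - q) * (1 / (q - 1)))"
      using b q by (simp add: powr_mult powr_powr)
    also have "(1 - q) * (1 / (q - 1)) = -1" using q by (simp add: field_simps)
    finally show ?thesis using q by (simp add: powr_minus divide_inverse)
  qed
  have Bq: "B powr q' = \<theta> powr q' * d powr q / (q - 1)"
  proof -
    have "B powr q' = cq \<beta> q powr q' * \<theta> powr q' * (d powr (q - 1)) powr q' * (\<beta> powr (- 1 / q)) powr q'"
      unfolding B_def using cq0 th d b by (simp add: powr_mult)
    also have "(d powr (q - 1)) powr q' = d powr q" unfolding q'_def using q by (simp add: powr_powr)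
    also have "(\<beta> powr (- 1 / q)) powr q' = \<beta> powr (- 1 / (q - 1))" unfolding q'_def using q
      by (simp add: powr_powr field_simps)
    also have "cq \<beta> q powr q' * \<theta> powr q' * d powr q * \<beta> powr (- 1 / (q - 1)) =
        (\<beta> powr (1 / (q - 1)) * \<beta> powr (- 1 / (q - 1))) * \<theta> powr q' * d powr q / (q - 1)"
      unfolding cqq' by (simp add: algebra_simps)
    also have "\<beta> powr (1 / (q - 1)) * \<beta> powr (- 1 / (q - 1)) = 1" using b by (simp add: powr_add[symmetric])
    finally show ?thesis by simp
  qed
  have "A * B \<le> A powr q / q + B powr q' / q'"
    using Youngs_inequality[OF _ q'1 conj A0 B0] q by simp
  also have "B powr q' / q' = \<theta> powr q' * d powr q / q"
  proof -
    have "B powr q' / q' = (\<theta> powr q' * d powr q / (q - 1)) / q'" by (simp only: Bq)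
    also have "\<dots> = \<theta> powr q' * d powr q / q" using q unfolding q'_def by (simp add: field_simps)
    finally show ?thesis .
  qed
  finally show ?thesis using AB Aq unfolding q'_def by simp
qed

lemma powr_convex0:
  fixes a b u q :: real
  assumes a: "a \<ge> 0" and b: "b \<ge> 0" and u: "0 \<le> u" "u \<le> 1" and q: "q \<ge> 1"
  shows "((1 - u) * a + u * b) powr q \<le> (1 - u) * a powr q + u * b powr q"
proof -
  have pc: "convex_on {0<..} (\<lambda>x. x powr q)" using powr_convex[OF q] .
  have aux: "(s * c) powr q \<le> s * c powr q" if "0 \<le> s" "s \<le> 1" "c \<ge> 0" for s c :: real
  proof -
    have "(s * c) powr q = s powr q * c powr q" using that by (simp add: powr_mult)
    also have "s powr q \<le> s powr 1" using that q by (intro powr_mono') auto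
    then have "s powr q * c powr q \<le> s * c powr q" using that by (simp add: mult_right_mono)
    finally show ?thesis .
  qed
  consider "a = 0" | "b = 0" | "a > 0" "b > 0" using a b by linarith
  then show ?thesis
  proof cases
    case 1 then show ?thesis using aux[of u b] u b by simp
  next
    case 2 then show ?thesis using aux[of "1 - u" a] u a by simp
  next
    case 3
    then show ?thesis using convex_onD[OF pc, of u a b] u by (simp add: algebra_simps)
  qed
qed

lemma normq_convex:
  fixes N :: "'a::euclidean_space \<Rightarrow> real"
  assumes N: "is_norm N" and q: "q \<ge> 1"
  shows "convex_on UNIV (\<lambda>y. N y powr q / q)"
proof (rule convex_onI)
  fix t :: real and x y :: 'a assume t: "0 < t" "t < 1"
  have "N ((1 - t) *\<^sub>R x + t *\<^sub>R y) powr q \<le> ((1 - t) * N x + t * N y) powr q"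
    using convex_onD[OF normN_convex[OF N], of t x y] t normN_basic(4)[OF N] q
    by (intro powr_mono2) auto
  also have "\<dots> \<le> (1 - t) * N x powr q + t * N y powr q"
    using powr_convex0[of "N x" "N y" t q] t q normN_basic(4)[OF N] by auto
  finally show "N ((1 - t) *\<^sub>R x + t *\<^sub>R y) powr q / q \<le> (1 - t) * (N x powr q / q) + t * (N y powr q / q)"
    using q by (simp add: divide_right_mono add_divide_distrib[symmetric])
qed auto

lemma lim_right_le:
  fixes F :: "real \<Rightarrow> real"
  assumes "(F \<longlongrightarrow> Y) (at_right 0)" "\<And>t. 0 < t \<Longrightarrow> t < 1 \<Longrightarrow> F t \<le> X"
  shows "Y \<le> X"
proof (rule tendsto_upperbound[OF assms(1)])
  show "\<forall>\<^sub>F x in at_right 0. F x \<le> X"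
    using eventually_at_right_real[of 0 1] assms(2) by (auto elim: eventually_mono)
qed simp

lemma quot_lim_right:
  fixes f :: "real \<Rightarrow> real"
  assumes "(f has_real_derivative P) (at 0)"
  shows "((\<lambda>t. (f t - f 0) / t) \<longlongrightarrow> P) (at_right 0)"
proof -
  have "((\<lambda>t. (f t - f 0) / (t - 0)) \<longlongrightarrow> P) (at 0)" using assms unfolding has_field_derivative_iff .
  then have "((\<lambda>t. (f t - f 0) / (t - 0)) \<longlongrightarrow> P) (at_right 0)" by (auto intro: tendsto_mono at_le)
  then show ?thesis by simp
qed

lemma zero_deriv_comp_lim:
  fixes \<psi> :: "real \<Rightarrow> real" and \<rho> :: "real \<Rightarrow> real"
  assumes d: "(\<psi> has_real_derivative 0) (at d)"
    and rho: "\<And>t. 0 < t \<Longrightarrow> \<bar>\<rho> t - d\<bar> \<le> t * n"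
  shows "((\<lambda>t. (\<psi> (\<rho> t) - \<psi> d) / t) \<longlongrightarrow> 0) (at_right 0)"
proof -
  define Q where "Q z = (if z = d then 0 else (\<psi> z - \<psi> d) / (z - d))" for z
  have "((\<lambda>z. (\<psi> z - \<psi> d) / (z - d)) \<longlongrightarrow> 0) (at d)" using d unfolding has_field_derivative_iff .
  then have "(Q \<longlongrightarrow> 0) (at d)"
    by (rule tendsto_cong[THEN iffD1, rotated]) (auto simp: Q_def eventually_at_filter)
  then have cQ: "isCont Q d" unfolding isCont_def Q_def by simp
  have n0: "n \<ge> 0" using rho[of 1] by simp
  have "((\<lambda>t. \<rho> t - d) \<longlongrightarrow> 0) (at_right 0)"
  proof (rule Lim_null_comparison)
    show "\<forall>\<^sub>F t in at_right 0. norm (\<rho> t - d) \<le> t * n"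
      using rho by (auto simp: eventually_at_filter)
    show "((\<lambda>t. t * n) \<longlongrightarrow> 0) (at_right 0)" by (auto intro!: tendsto_eq_intros)
  qed
  then have "(\<rho> \<longlongrightarrow> d) (at_right 0)" by (simp add: Lim_null[of \<rho> d])
  then have "((\<lambda>t. Q (\<rho> t)) \<longlongrightarrow> Q d) (at_right 0)" by (rule isCont_tendsto_compose[OF cQ])
  then have lQ: "((\<lambda>t. n * \<bar>Q (\<rho> t)\<bar>) \<longlongrightarrow> 0) (at_right 0)"
    unfolding Q_def by (auto intro!: tendsto_eq_intros)
  show ?thesis
  proof (rule Lim_null_comparison[OF _ lQ])
    show "\<forall>\<^sub>F t in at_right 0. norm ((\<psi> (\<rho> t) - \<psi> d) / t) \<le> n * \<bar>Q (\<rho> t)\<bar>"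
      unfolding eventually_at_filter
    proof (intro always_eventually allI impI)
      fix t :: real assume t: "t \<noteq> 0" "t \<in> {0<..}"
      show "norm ((\<psi> (\<rho> t) - \<psi> d) / t) \<le> n * \<bar>Q (\<rho> t)\<bar>"
      proof (cases "\<rho> t = d")
        case True then show ?thesis using n0 by (simp add: Q_def)
      next
        case False
        then have "(\<psi> (\<rho> t) - \<psi> d) / t = Q (\<rho> t) * ((\<rho> t - d) / t)" unfolding Q_def by simp
        then have "norm ((\<psi> (\<rho> t) - \<psi> d) / t) = \<bar>Q (\<rho> t)\<bar> * (\<bar>\<rho> t - d\<bar> / t)" using t by (simp add: abs_mult)
        also have "\<dots> \<le> \<bar>Q (\<rho> t)\<bar> * n"
          using rho[of t] t by (intro mult_left_mono) (auto simp: divide_le_eq mult.commute)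
        finally show ?thesis by (simp add: mult.commute)
      qed
    qed
  qed
qed

lemma step_pos:
  fixes N :: "'a::euclidean_space \<Rightarrow> real" and lr :: "'a \<Rightarrow> real"
  assumes N: "is_norm N" and hd: "holder_derivs N p \<nu> L Dg g" and p: "p \<ge> 1" and nu: "0 \<le> \<nu>" and L: "L > 0"
    and pu: "unif_convex N q \<beta> (\<lambda>y. N y powr q / q)" and beta: "\<beta> > 0" and q: "2 \<le> q" and sg: "q \<le> s"
    and M: "M > 0" and c: "c > 0" and th: "0 < \<theta>" "\<theta> < 1"
    and conv: "\<And>x y t. x \<in> D \<Longrightarrow> y \<in> D \<Longrightarrow> 0 \<le> t \<Longrightarrow> t \<le> 1 \<Longrightarrow>
       (1 - t) *\<^sub>R x + t *\<^sub>R y \<in> D \<and> lr ((1 - t) *\<^sub>R x + t *\<^sub>R y) \<le> (1 - t) * lr x + t * lr y"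
    and xk: "xk \<in> D" and u: "u \<in> D"
    and opt: "\<And>y. y \<in> D \<Longrightarrow> taylor_model Dg p yh xk + M * N (xk - yh) powr s + lr xk
                 \<le> taylor_model Dg p yh y + M * N (y - yh) powr s + lr y"
    and dpos: "N (xk - yh) > 0"
    and tau: "c * M * s * N (xk - yh) powr (s - q) \<le> 1"
    and err: "L * N (xk - yh) powr (real p + \<nu> - q) * c \<le> cq \<beta> q * \<theta> * (c * M * s * N (xk - yh) powr (s - q))"
  shows "(1 - \<theta> powr (q / (q - 1))) / q * (M * s * N (xk - yh) powr s)
     \<le> Dg 1 xk [u - xk] + lr u - lr xk + N (u - yh) powr q / (q * c)"
proof -
  define w where "w = xk - yh"
  define d where "d = N w"
  define v where "v = u - xk"
  define n where "n = N v"
  define \<tau> where "\<tau> = c * M * s * d powr (s - q)"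
  define \<Phi> where "\<Phi> = taylor_model Dg p yh"
  define \<rho> where "\<rho> t = N (w + t *\<^sub>R v)" for t
  define \<phi> where "\<phi> y = N y powr q / q" for y
  define P where "P = (\<Sum>m<p. Dg (Suc m) yh (replicate m (xk - yh) @ [v]) / fact m)"
  define LHS where "LHS = Dg 1 xk [v] + lr u - lr xk + N (u - yh) powr q / (q * c)"
  have d0: "d > 0" using dpos unfolding d_def w_def .
  have n0: "n \<ge> 0" unfolding n_def using normN_basic(4)[OF N] .
  have tau0: "\<tau> \<ge> 0" unfolding \<tau>_def using c M sg q d0 by simp
  have tau1: "\<tau> \<le> 1" using tau unfolding \<tau>_def d_def w_def .
  have q1: "q > 1" using q by simp
  have uw: "u - yh = w + v" unfolding w_def v_def by simp
  have xkw: "yh + w = xk" unfolding w_def by simp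
  define G where "G t = Dg 1 xk [v] - (\<Phi> (xk + t *\<^sub>R v) - \<Phi> xk) / t
      + \<tau> / c * (d powr q / q + \<beta> / q * ((1 - t) powr q * n powr q))" for t
  define \<psi> where "\<psi> z = \<tau> / (c * q) * z powr q - M * z powr s" for z
  define C where "C t = (\<psi> (\<rho> t) - \<psi> d) / t" for t
  have main: "G t + C t \<le> LHS" if t: "0 < t" "t < 1" for t
  proof -
    have yt: "xk + t *\<^sub>R v = (1 - t) *\<^sub>R xk + t *\<^sub>R u" unfolding v_def by (simp add: algebra_simps)
    have ytD: "xk + t *\<^sub>R v \<in> D" and lryt: "lr (xk + t *\<^sub>R v) \<le> (1 - t) * lr xk + t * lr u"
      using conv[OF xk u, of t] t unfolding yt by auto
    have "\<Phi> xk + M * d powr s + lr xk \<le> \<Phi> (xk + t *\<^sub>R v) + M * \<rho> t powr s + lr (xk + t *\<^sub>R v)"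
      using opt[OF ytD] unfolding \<Phi>_def d_def \<rho>_def w_def by (simp add: algebra_simps)
    moreover have "(1 - t) * lr xk + t * lr u = lr xk + t * (lr u - lr xk)" by (simp add: algebra_simps)
    ultimately have "t * (lr u - lr xk) \<ge> - (\<Phi> (xk + t *\<^sub>R v) - \<Phi> xk) - M * (\<rho> t powr s - d powr s)"
      using lryt by (simp add: algebra_simps)
    then have "(- (\<Phi> (xk + t *\<^sub>R v) - \<Phi> xk) - M * (\<rho> t powr s - d powr s)) / t \<le> lr u - lr xk"
      using t by (subst pos_divide_le_eq[OF t(1)]) (simp add: mult.commute)
    then have I1: "lr u - lr xk \<ge> - (\<Phi> (xk + t *\<^sub>R v) - \<Phi> xk) / t - M * (\<rho> t powr s - d powr s) / t"
      by (simp add: diff_divide_distrib)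
    obtain \<zeta> where \<zeta>: "\<forall>y. \<phi> y \<ge> \<phi> (w + t *\<^sub>R v) + \<zeta> \<bullet> (y - (w + t *\<^sub>R v))"
      using subgradient_exists[OF normq_convex[OF N, of q]] q unfolding \<phi>_def by fastforce
    have uc: "\<forall>y. \<phi> y \<ge> \<phi> (w + t *\<^sub>R v) + \<zeta> \<bullet> (y - (w + t *\<^sub>R v)) + \<beta> / q * N (y - (w + t *\<^sub>R v)) powr q"
      using pu \<zeta> unfolding unif_convex_def \<phi>_def by blast
    have a1: "\<phi> (w + v) \<ge> \<phi> (w + t *\<^sub>R v) + (1 - t) * (\<zeta> \<bullet> v) + \<beta> / q * ((1 - t) * n) powr q"
    proof -
      have "w + v - (w + t *\<^sub>R v) = (1 - t) *\<^sub>R v" by (simp add: algebra_simps)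
      moreover have "N ((1 - t) *\<^sub>R v) = (1 - t) * n" using normN_basic(5)[OF N] t unfolding n_def by simp
      ultimately show ?thesis using uc[rule_format, of "w + v"] by simp
    qed
    have a2: "\<zeta> \<bullet> v \<ge> (\<phi> (w + t *\<^sub>R v) - \<phi> w) / t"
    proof -
      have "\<phi> w \<ge> \<phi> (w + t *\<^sub>R v) - t * (\<zeta> \<bullet> v)" using \<zeta>[rule_format, of w] by simp
      then show ?thesis using t by (simp add: field_simps)
    qed
    have a3: "((1 - t) * n) powr q = (1 - t) powr q * n powr q" using t n0 by (simp add: powr_mult)
    have I2: "\<phi> (w + v) \<ge> \<phi> (w + t *\<^sub>R v) + (1 - t) * ((\<phi> (w + t *\<^sub>R v) - \<phi> w) / t)
        + \<beta> / q * ((1 - t) powr q * n powr q)"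
      using a1 a2 t a3 by (smt (verit) mult_left_mono)
    have phi0: "\<phi> (w + v) \<ge> 0" unfolding \<phi>_def using q normN_basic(4)[OF N] by simp
    have I3: "N (u - yh) powr q / (q * c) \<ge> \<tau> / c * \<phi> (w + v)"
    proof -
      have "\<tau> * \<phi> (w + v) \<le> \<phi> (w + v)" using tau1 phi0 tau0 by (simp add: mult_left_le_one_le)
      then have "\<tau> / c * \<phi> (w + v) \<le> \<phi> (w + v) / c" using c by (simp add: divide_right_mono)
      also have "\<phi> (w + v) / c = N (u - yh) powr q / (q * c)" unfolding \<phi>_def uw by simp
      finally show ?thesis .
    qed
    have I4: "\<tau> / c * \<phi> (w + v) \<ge> \<tau> / c * (\<phi> (w + t *\<^sub>R v) + (1 - t) * ((\<phi> (w + t *\<^sub>R v) - \<phi> w) / t)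
        + \<beta> / q * ((1 - t) powr q * n powr q))"
      using I2 tau0 c by (intro mult_left_mono) auto
    have "LHS \<ge> Dg 1 xk [v] - (\<Phi> (xk + t *\<^sub>R v) - \<Phi> xk) / t - M * (\<rho> t powr s - d powr s) / t
       + \<tau> / c * (\<phi> (w + t *\<^sub>R v) + (1 - t) * ((\<phi> (w + t *\<^sub>R v) - \<phi> w) / t)
        + \<beta> / q * ((1 - t) powr q * n powr q))"
      unfolding LHS_def using I1 I3 I4 by linarith
    also have "Dg 1 xk [v] - (\<Phi> (xk + t *\<^sub>R v) - \<Phi> xk) / t - M * (\<rho> t powr s - d powr s) / t
       + \<tau> / c * (\<phi> (w + t *\<^sub>R v) + (1 - t) * ((\<phi> (w + t *\<^sub>R v) - \<phi> w) / t)
        + \<beta> / q * ((1 - t) powr q * n powr q)) = G t + C t"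
      unfolding G_def C_def \<psi>_def \<phi>_def \<rho>_def d_def using t c q1 by (simp add: field_simps)
    finally show ?thesis by simp
  qed
  have lim1: "((\<lambda>t. (\<Phi> (xk + t *\<^sub>R v) - \<Phi> xk) / t) \<longlongrightarrow> P) (at_right 0)"
    using quot_lim_right[OF taylor_deriv[OF hd, of yh xk v]] unfolding \<Phi>_def P_def by simp
  have l1: "((\<lambda>t::real. 1 - t) \<longlongrightarrow> 1 - 0) (at_right 0)" by (intro tendsto_intros)
  have lp: "((\<lambda>t::real. (1 - t) powr q) \<longlongrightarrow> 1 powr q) (at_right 0)"
    using tendsto_powr[OF l1 tendsto_const[of q]] by simp
  have limG: "(G \<longlongrightarrow> Dg 1 xk [v] - P + \<tau> / c * (d powr q / q + \<beta> / q * (1 powr q * n powr q))) (at_right 0)"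
    unfolding G_def by (intro tendsto_intros lim1 lp)
  have dpsi: "(\<psi> has_real_derivative 0) (at d)"
  proof -
    have "(\<psi> has_real_derivative \<tau> / (c * q) * (q * d powr (q - 1)) - M * (s * d powr (s - 1))) (at d)"
      unfolding \<psi>_def using d0 by (intro DERIV_diff DERIV_cmult has_real_derivative_powr) auto
    moreover have "\<tau> / (c * q) * (q * d powr (q - 1)) - M * (s * d powr (s - 1)) = 0"
    proof -
      have "\<tau> / (c * q) * (q * d powr (q - 1)) = M * s * (d powr (s - q) * d powr (q - 1))"
        unfolding \<tau>_def using c q1 by (simp add: field_simps)
      also have "d powr (s - q) * d powr (q - 1) = d powr (s - 1)" using d0 by (simp add: powr_add[symmetric])
      finally show ?thesis by simp
    qed
    ultimately show ?thesis by simp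
  qed
  have limC: "(C \<longlongrightarrow> 0) (at_right 0)"
    unfolding C_def
  proof (rule zero_deriv_comp_lim[OF dpsi])
    fix t :: real assume t: "0 < t"
    have "\<bar>\<rho> t - d\<bar> \<le> N (w + t *\<^sub>R v - w)" unfolding \<rho>_def d_def by (rule normN_basic(7)[OF N])
    also have "\<dots> = t * n" using normN_basic(5)[OF N] t unfolding n_def by simp
    finally show "\<bar>\<rho> t - d\<bar> \<le> t * n" .
  qed
  have Y: "Dg 1 xk [v] - P + \<tau> / c * (d powr q / q + \<beta> / q * (1 powr q * n powr q)) + 0 \<le> LHS"
  proof (rule lim_right_le[OF tendsto_add[OF limG limC]])
    fix t :: real assume "0 < t" "t < 1" then show "G t + C t \<le> LHS" by (rule main)
  qed
  have E: "\<bar>Dg 1 xk [v] - P\<bar> \<le> L * d powr \<nu> * d ^ (p - 1) * n"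
    using taylor_err[OF hd N p nu, of yh w v] L unfolding xkw P_def d_def n_def w_def by simp
  have E2: "L * d powr \<nu> * d ^ (p - 1) = L * d powr (real p + \<nu> - q) * d powr (q - 1)"
  proof -
    have a: "d ^ (p - 1) = d powr (real (p - 1))" using d0 by (rule powr_realpow[symmetric])
    have b: "d powr \<nu> * d powr (real (p - 1)) = d powr (\<nu> + real (p - 1))" by (rule powr_add[symmetric])
    have c': "\<nu> + real (p - 1) = (real p + \<nu> - q) + (q - 1)" using p by (simp add: of_nat_diff)
    have e: "d powr ((real p + \<nu> - q) + (q - 1)) = d powr (real p + \<nu> - q) * d powr (q - 1)" by (rule powr_add)
    show ?thesis unfolding a mult.assoc b c' e by simp
  qed
  have E3: "L * d powr (real p + \<nu> - q) \<le> cq \<beta> q * \<theta> * \<tau> / c"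
    using err c unfolding \<tau>_def d_def w_def by (simp add: field_simps)
  have E4: "L * d powr \<nu> * d ^ (p - 1) * n \<le> \<tau> / c * (cq \<beta> q * \<theta> * d powr (q - 1) * n)"
  proof -
    have "L * d powr \<nu> * d ^ (p - 1) * n = (L * d powr (real p + \<nu> - q)) * (d powr (q - 1) * n)"
      unfolding E2 by simp
    also have "\<dots> \<le> (cq \<beta> q * \<theta> * \<tau> / c) * (d powr (q - 1) * n)"
      using E3 n0 by (intro mult_right_mono) auto
    finally show ?thesis by (simp add: field_simps)
  qed
  have Yg: "\<beta> * n powr q / q + \<theta> powr (q / (q - 1)) * d powr q / q \<ge> cq \<beta> q * \<theta> * d powr (q - 1) * n"
    using young_step[OF beta q1 _ _ n0, of \<theta> d] th d0 by simp
  have F: "\<tau> / c * (d powr q / q + \<beta> / q * n powr q - cq \<beta> q * \<theta> * d powr (q - 1) * n) \<le> LHS"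
    using Y E E4 by (simp add: right_diff_distrib)
  have F2: "\<tau> / c * ((1 - \<theta> powr (q / (q - 1))) / q * d powr q)
     \<le> \<tau> / c * (d powr q / q + \<beta> / q * n powr q - cq \<beta> q * \<theta> * d powr (q - 1) * n)"
  proof (rule mult_left_mono)
    have "(1 - \<theta> powr (q / (q - 1))) / q * d powr q = d powr q / q - \<theta> powr (q / (q - 1)) * d powr q / q"
      using q1 by (simp add: field_simps)
    moreover have "\<beta> / q * n powr q = \<beta> * n powr q / q" by simp
    ultimately show "(1 - \<theta> powr (q / (q - 1))) / q * d powr q
        \<le> d powr q / q + \<beta> / q * n powr q - cq \<beta> q * \<theta> * d powr (q - 1) * n" using Yg by linarith
  qed (use tau0 c in simp)
  have F3: "\<tau> / c * d powr q = M * s * d powr s"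
  proof -
    have "\<tau> / c * d powr q = M * s * (d powr (s - q) * d powr q)" unfolding \<tau>_def using c by simp
    also have "d powr (s - q) * d powr q = d powr s" using d0 by (simp add: powr_add[symmetric])
    finally show ?thesis .
  qed
  have "(1 - \<theta> powr (q / (q - 1))) / q * (M * s * d powr s) = \<tau> / c * ((1 - \<theta> powr (q / (q - 1))) / q * d powr q)"
  proof -
    have "\<tau> / c * ((1 - \<theta> powr (q / (q - 1))) / q * d powr q) = (1 - \<theta> powr (q / (q - 1))) / q * (\<tau> / c * d powr q)"
      by (simp add: algebra_simps)
    then show ?thesis unfolding F3 by simp
  qed
  then show ?thesis using F F2 unfolding LHS_def v_def d_def w_def by linarith
qed

lemma step_zero:
  fixes N :: "'a::euclidean_space \<Rightarrow> real" and lr :: "'a \<Rightarrow> real"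
  assumes N: "is_norm N" and hd: "holder_derivs N p \<nu> L Dg g" and p: "p \<ge> 1" and nu: "0 \<le> \<nu>" and L: "L > 0"
    and q: "2 \<le> q" and sg: "q \<le> s" and M: "M > 0" and c: "c > 0"
    and conv: "\<And>x y t. x \<in> D \<Longrightarrow> y \<in> D \<Longrightarrow> 0 \<le> t \<Longrightarrow> t \<le> 1 \<Longrightarrow>
       (1 - t) *\<^sub>R x + t *\<^sub>R y \<in> D \<and> lr ((1 - t) *\<^sub>R x + t *\<^sub>R y) \<le> (1 - t) * lr x + t * lr y"
    and xk: "xk \<in> D" and u: "u \<in> D"
    and opt: "\<And>y. y \<in> D \<Longrightarrow> taylor_model Dg p yh xk + M * N (xk - yh) powr s + lr xk
                 \<le> taylor_model Dg p yh y + M * N (y - yh) powr s + lr y"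
    and d0: "N (xk - yh) = 0"
  shows "0 \<le> Dg 1 xk [u - xk] + lr u - lr xk + N (u - yh) powr q / (q * c)"
proof -
  define w where "w = xk - yh"
  define v where "v = u - xk"
  define n where "n = N v"
  define \<Phi> where "\<Phi> = taylor_model Dg p yh"
  define P where "P = (\<Sum>m<p. Dg (Suc m) yh (replicate m (xk - yh) @ [v]) / fact m)"
  have w0: "w = 0" using d0 N unfolding w_def is_norm_def by blast
  then have xy: "yh = xk" unfolding w_def by simp
  have n0: "n \<ge> 0" unfolding n_def using normN_basic(4)[OF N] .
  define F where "F t = Dg 1 xk [v] - (\<Phi> (xk + t *\<^sub>R v) - \<Phi> xk) / t - M * t * n powr s" for t
  have main: "F t \<le> Dg 1 xk [v] + lr u - lr xk" if t: "0 < t" "t < 1" for t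
  proof -
    have yt: "xk + t *\<^sub>R v = (1 - t) *\<^sub>R xk + t *\<^sub>R u" unfolding v_def by (simp add: algebra_simps)
    have ytD: "xk + t *\<^sub>R v \<in> D" and lryt: "lr (xk + t *\<^sub>R v) \<le> (1 - t) * lr xk + t * lr u"
      using conv[OF xk u, of t] t unfolding yt by auto
    have s0: "s > 0" using q sg by simp
    have "\<Phi> xk + lr xk \<le> \<Phi> (xk + t *\<^sub>R v) + M * N (t *\<^sub>R v) powr s + lr (xk + t *\<^sub>R v)"
      using opt[OF ytD] s0 normN_basic(1)[OF N] unfolding \<Phi>_def xy by simp
    moreover have "N (t *\<^sub>R v) powr s = t powr s * n powr s"
      using normN_basic(5)[OF N] t n0 unfolding n_def by (simp add: powr_mult)
    moreover have "t powr s \<le> t powr 2" using t q sg by (intro powr_mono') auto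
    then have "t powr s * n powr s \<le> (t * t) * n powr s" using t by (simp add: mult_right_mono power2_eq_square)
    moreover have "(1 - t) * lr xk + t * lr u = lr xk + t * (lr u - lr xk)" by (simp add: algebra_simps)
    ultimately have "t * (lr u - lr xk) \<ge> - (\<Phi> (xk + t *\<^sub>R v) - \<Phi> xk) - M * (t * t) * n powr s"
      using lryt M by (smt (verit, best) mult_left_mono mult.assoc)
    then have "(- (\<Phi> (xk + t *\<^sub>R v) - \<Phi> xk) - M * (t * t) * n powr s) / t \<le> lr u - lr xk"
      using t by (subst pos_divide_le_eq[OF t(1)]) (simp add: mult.commute)
    moreover have "(- (\<Phi> (xk + t *\<^sub>R v) - \<Phi> xk) - M * (t * t) * n powr s) / t
        = - (\<Phi> (xk + t *\<^sub>R v) - \<Phi> xk) / t - M * t * n powr s" using t by (simp add: field_simps)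
    moreover have "- ((\<Phi> (xk + t *\<^sub>R v) - \<Phi> xk) / t) = - (\<Phi> (xk + t *\<^sub>R v) - \<Phi> xk) / t"
      by (rule minus_divide_left)
    ultimately show ?thesis unfolding F_def using t by linarith
  qed
  have lim1: "((\<lambda>t. (\<Phi> (xk + t *\<^sub>R v) - \<Phi> xk) / t) \<longlongrightarrow> P) (at_right 0)"
    using quot_lim_right[OF taylor_deriv[OF hd, of yh xk v]] unfolding \<Phi>_def P_def by simp
  have limF: "(F \<longlongrightarrow> Dg 1 xk [v] - P - M * 0 * n powr s) (at_right 0)"
    unfolding F_def by (intro tendsto_intros lim1)
  have Y: "Dg 1 xk [v] - P - M * 0 * n powr s \<le> Dg 1 xk [v] + lr u - lr xk"
    by (rule lim_right_le[OF limF main])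
  have E: "\<bar>Dg 1 xk [v] - P\<bar> \<le> L * N w powr \<nu> * N w ^ (p - 1) * n"
    using taylor_err[OF hd N p nu, of yh w v] L unfolding P_def n_def w_def by simp
  then have "Dg 1 xk [v] - P = 0" using w0 normN_basic(1)[OF N] by simp
  moreover have "N (u - yh) powr q / (q * c) \<ge> 0" using c q normN_basic(4)[OF N] by simp
  ultimately show ?thesis using Y unfolding v_def by simp
qed

lemma grad_ineq:
  fixes g :: "'a::real_normed_vector \<Rightarrow> real"
  assumes cg: "convex_on UNIV g" and d: "(g has_derivative G) (at x)"
  shows "g y \<ge> g x + G (y - x)"
proof -
  define \<phi> where "\<phi> t = g (x + t *\<^sub>R (y - x))" for t :: real
  have c\<phi>: "convex_on UNIV \<phi>"
  proof (rule convex_onI)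
    fix t a b :: real assume t: "0 < t" "t < 1"
    have "x + ((1 - t) * a + t * b) *\<^sub>R (y - x) = (1 - t) *\<^sub>R (x + a *\<^sub>R (y - x)) + t *\<^sub>R (x + b *\<^sub>R (y - x))"
      by (simp add: algebra_simps)
    then show "\<phi> ((1 - t) *\<^sub>R a + t *\<^sub>R b) \<le> (1 - t) * \<phi> a + t * \<phi> b"
      unfolding \<phi>_def using convex_onD[OF cg, of t "x + a *\<^sub>R (y - x)" "x + b *\<^sub>R (y - x)"] t by simp
  qed auto
  have "(\<phi> has_real_derivative G (y - x)) (at 0)"
    unfolding \<phi>_def by (rule line_deriv) (use d in simp)
  then have "(\<phi> has_real_derivative G (y - x)) (at 0 within UNIV)" by simp
  from convex_on_imp_above_tangent[OF c\<phi> _ _ _ this, of 1] have "\<phi> 1 - \<phi> 0 \<ge> G (y - x) * (1 - 0)" by simp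
  then show ?thesis unfolding \<phi>_def by simp
qed

lemma min_growth:
  fixes N :: "'a::euclidean_space \<Rightarrow> real" and h \<Psi> :: "'a \<Rightarrow> real"
  assumes N: "is_norm N" and q: "q \<ge> 1" and hc: "convex_on UNIV h" and huc: "unif_convex N q \<gamma> h"
    and conv: "\<And>x y t. x \<in> D \<Longrightarrow> y \<in> D \<Longrightarrow> 0 \<le> t \<Longrightarrow> t \<le> 1 \<Longrightarrow>
       (1 - t) *\<^sub>R x + t *\<^sub>R y \<in> D \<and> \<Psi> ((1 - t) *\<^sub>R x + t *\<^sub>R y) \<le> (1 - t) * \<Psi> x + t * \<Psi> y"
    and z: "z \<in> D" and mn: "\<And>y. y \<in> D \<Longrightarrow> \<Psi> z + h z \<le> \<Psi> y + h y"
    and y: "y \<in> D"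
  shows "\<Psi> z + h z + \<gamma> / q * N (y - z) powr q \<le> \<Psi> y + h y"
proof -
  define n where "n = N (y - z)"
  have n0: "n \<ge> 0" unfolding n_def using normN_basic(4)[OF N] .
  define F where "F t = \<Psi> z + h z + \<gamma> / q * ((1 - t) powr q * n powr q)" for t :: real
  have main: "F t \<le> \<Psi> y + h y" if t: "0 < t" "t < 1" for t
  proof -
    define yt where "yt = (1 - t) *\<^sub>R z + t *\<^sub>R y"
    have ytD: "yt \<in> D" and \<Psi>t: "\<Psi> yt \<le> (1 - t) * \<Psi> z + t * \<Psi> y" using conv[OF z y, of t] t unfolding yt_def by auto
    obtain \<zeta> where \<zeta>: "\<forall>w. h w \<ge> h yt + \<zeta> \<bullet> (w - yt)" using subgradient_exists[OF hc] by blast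
    have uc: "\<forall>w. h w \<ge> h yt + \<zeta> \<bullet> (w - yt) + \<gamma> / q * N (w - yt) powr q"
      using huc \<zeta> unfolding unif_convex_def by blast
    have e1: "z - yt = (- t) *\<^sub>R (y - z)" unfolding yt_def by (simp add: algebra_simps)
    have e2: "y - yt = (1 - t) *\<^sub>R (y - z)" unfolding yt_def by (simp add: algebra_simps)
    have hz: "h z \<ge> h yt - t * (\<zeta> \<bullet> (y - z))" using \<zeta>[rule_format, of z] unfolding e1 by simp
    have N2: "N (y - yt) = (1 - t) * n" unfolding e2 n_def using normN_basic(5)[OF N] t by simp
    have hy: "h y \<ge> h yt + (1 - t) * (\<zeta> \<bullet> (y - z)) + \<gamma> / q * ((1 - t) powr q * n powr q)"
    proof -
      have i: "\<zeta> \<bullet> (y - yt) = (1 - t) * (\<zeta> \<bullet> (y - z))" unfolding e2 by simp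
      have p: "N (y - yt) powr q = (1 - t) powr q * n powr q" unfolding N2 using t n0 by (simp add: powr_mult)
      show ?thesis using uc[rule_format, of y] unfolding i p .
    qed
    have "\<Psi> z + h z \<le> \<Psi> yt + h yt" using mn[OF ytD] .
    also have "\<dots> \<le> (1 - t) * \<Psi> z + t * \<Psi> y + ((1 - t) * h z + t * h y - t * (\<gamma> / q * ((1 - t) powr q * n powr q)))"
    proof -
      have "(1 - t) * h z \<ge> (1 - t) * (h yt - t * (\<zeta> \<bullet> (y - z)))" using hz t by (intro mult_left_mono) auto
      moreover have "t * h y \<ge> t * (h yt + (1 - t) * (\<zeta> \<bullet> (y - z)) + \<gamma> / q * ((1 - t) powr q * n powr q))"
        using hy t by (intro mult_left_mono) auto
      ultimately have "h yt \<le> (1 - t) * h z + t * h y - t * (\<gamma> / q * ((1 - t) powr q * n powr q))"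
        by (simp add: algebra_simps)
      then show ?thesis using \<Psi>t by linarith
    qed
    finally have "t * (\<Psi> z + h z + \<gamma> / q * ((1 - t) powr q * n powr q)) \<le> t * (\<Psi> y + h y)"
      by (simp add: algebra_simps)
    then show ?thesis unfolding F_def using t by simp
  qed
  have l1: "((\<lambda>t::real. 1 - t) \<longlongrightarrow> 1 - 0) (at_right 0)" by (intro tendsto_intros)
  have lp: "((\<lambda>t::real. (1 - t) powr q) \<longlongrightarrow> 1 powr q) (at_right 0)"
    using tendsto_powr[OF l1 tendsto_const[of q]] by simp
  have "(F \<longlongrightarrow> \<Psi> z + h z + \<gamma> / q * (1 powr q * n powr q)) (at_right 0)"
    unfolding F_def by (intro tendsto_intros lp)
  from lim_right_le[OF this main] show ?thesis unfolding n_def by simp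
qed

lemma l_conv:
  fixes l :: "'a::euclidean_space \<Rightarrow> ereal"
  assumes pcc: "proper_closed_convex l"
    and x: "l x \<noteq> \<infinity>" and y: "l y \<noteq> \<infinity>" and t: "0 \<le> t" "t \<le> 1"
  shows "l ((1 - t) *\<^sub>R x + t *\<^sub>R y) \<noteq> \<infinity> \<and>
    real_of_ereal (l ((1 - t) *\<^sub>R x + t *\<^sub>R y)) \<le> (1 - t) * real_of_ereal (l x) + t * real_of_ereal (l y)"
proof -
  have nm: "\<And>z. l z \<noteq> -\<infinity>" using pcc unfolding proper_closed_convex_def by blast
  have cE: "convex {(x, t::real). l x \<le> ereal t}" using pcc unfolding proper_closed_convex_def by blast
  have lx: "l x = ereal (real_of_ereal (l x))" using x nm[of x] by (cases "l x") auto
  have ly: "l y = ereal (real_of_ereal (l y))" using y nm[of y] by (cases "l y") auto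
  have "(x, real_of_ereal (l x)) \<in> {(x, t::real). l x \<le> ereal t}" using lx by simp
  moreover have "(y, real_of_ereal (l y)) \<in> {(x, t::real). l x \<le> ereal t}" using ly by simp
  ultimately have "(1 - t) *\<^sub>R (x, real_of_ereal (l x)) + t *\<^sub>R (y, real_of_ereal (l y)) \<in> {(x, t::real). l x \<le> ereal t}"
    using cE t unfolding convex_def by (meson diff_ge_0_iff_ge le_add_diff_inverse2 )
  then have le: "l ((1 - t) *\<^sub>R x + t *\<^sub>R y) \<le> ereal ((1 - t) * real_of_ereal (l x) + t * real_of_ereal (l y))"
    by simp
  then have "l ((1 - t) *\<^sub>R x + t *\<^sub>R y) \<noteq> \<infinity>" by auto
  moreover have "real_of_ereal (l ((1 - t) *\<^sub>R x + t *\<^sub>R y)) \<le> (1 - t) * real_of_ereal (l x) + t * real_of_ereal (l y)"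
    using le nm[of "(1 - t) *\<^sub>R x + t *\<^sub>R y"] calculation by (cases "l ((1 - t) *\<^sub>R x + t *\<^sub>R y)") auto
  ultimately show ?thesis by blast
qed

lemma affsum_conv:
  fixes lr :: "'a::real_vector \<Rightarrow> real" and G :: "'b \<Rightarrow> 'a \<Rightarrow> real"
  assumes lin: "\<And>j. j \<in> J \<Longrightarrow> linear (G j)" and a: "\<And>j. j \<in> J \<Longrightarrow> a j \<ge> 0"
    and lc: "lr ((1 - t) *\<^sub>R x + t *\<^sub>R y) \<le> (1 - t) * lr x + t * lr y" and t: "0 \<le> t" "t \<le> 1"
  shows "(\<Sum>j\<in>J. a j * (c j + G j ((1 - t) *\<^sub>R x + t *\<^sub>R y - xx j) + lr ((1 - t) *\<^sub>R x + t *\<^sub>R y)))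
     \<le> (1 - t) * (\<Sum>j\<in>J. a j * (c j + G j (x - xx j) + lr x)) + t * (\<Sum>j\<in>J. a j * (c j + G j (y - xx j) + lr y))"
proof -
  have "(\<Sum>j\<in>J. a j * (c j + G j ((1 - t) *\<^sub>R x + t *\<^sub>R y - xx j) + lr ((1 - t) *\<^sub>R x + t *\<^sub>R y)))
     \<le> (\<Sum>j\<in>J. (1 - t) * (a j * (c j + G j (x - xx j) + lr x)) + t * (a j * (c j + G j (y - xx j) + lr y)))"
  proof (rule sum_mono)
    fix j assume j: "j \<in> J"
    have e: "(1 - t) *\<^sub>R x + t *\<^sub>R y - xx j = (1 - t) *\<^sub>R (x - xx j) + t *\<^sub>R (y - xx j)" by (simp add: algebra_simps)
    have "G j ((1 - t) *\<^sub>R x + t *\<^sub>R y - xx j) = (1 - t) * G j (x - xx j) + t * G j (y - xx j)"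
      unfolding e using linear_add[OF lin[OF j]] linear_cmul[OF lin[OF j]] by simp
    then have "c j + G j ((1 - t) *\<^sub>R x + t *\<^sub>R y - xx j) + lr ((1 - t) *\<^sub>R x + t *\<^sub>R y)
        \<le> (1 - t) * (c j + G j (x - xx j) + lr x) + t * (c j + G j (y - xx j) + lr y)"
      using lc by (simp add: algebra_simps)
    then have "a j * (c j + G j ((1 - t) *\<^sub>R x + t *\<^sub>R y - xx j) + lr ((1 - t) *\<^sub>R x + t *\<^sub>R y))
        \<le> a j * ((1 - t) * (c j + G j (x - xx j) + lr x) + t * (c j + G j (y - xx j) + lr y))"
      using a[OF j] by (rule mult_left_mono)
    then show "a j * (c j + G j ((1 - t) *\<^sub>R x + t *\<^sub>R y - xx j) + lr ((1 - t) *\<^sub>R x + t *\<^sub>R y))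
        \<le> (1 - t) * (a j * (c j + G j (x - xx j) + lr x)) + t * (a j * (c j + G j (y - xx j) + lr y))"
      by (simp add: algebra_simps)
  qed
  also have "\<dots> = (1 - t) * (\<Sum>j\<in>J. a j * (c j + G j (x - xx j) + lr x)) + t * (\<Sum>j\<in>J. a j * (c j + G j (y - xx j) + lr y))"
    by (simp add: sum.distrib sum_distrib_left)
  finally show ?thesis .
qed

lemma ereal_sum_conv:
  "(\<Sum>j\<in>J. ereal (a j) * (ereal (c j) + ereal L)) = ereal (\<Sum>j\<in>J. a j * (c j + L))"
  by simp

lemma ereal_sum_inf:
  assumes "finite J" "J \<noteq> {}" "\<And>j. j \<in> J \<Longrightarrow> a j > 0"
  shows "(\<Sum>j\<in>J. ereal (a j) * (ereal (c j) + \<infinity>)) = \<infinity>"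
proof -
  obtain j where "j \<in> J" using assms(2) by blast
  then show ?thesis using assms by (subst sum_Pinfty) auto
qed

lemma pos_eq_by_ln:
  fixes x y :: real
  assumes "x > 0" "y > 0" "ln x = ln y" shows "x = y"
  using assms by simp

lemma term_identity:
  fixes L a A cqv \<gamma> d \<alpha> r q :: real
  assumes L: "L > 0" and a: "a > 0" and A: "A > 0" and c: "cqv > 0" and g: "\<gamma> > 0" and d: "d > 0"
    and e: "r - q > 0"
  defines "la \<equiv> a powr q / (cqv * \<gamma> * A powr (q - 1))"
  defines "sv \<equiv> \<alpha> * r + (1 - \<alpha>) * q"
  shows "(L * la * d powr (r - q)) powr (sv / (r - q)) * (A powr (r - 1) / a powr r) powr (q / (r - q))
      * L powr (- q / (r - q)) * cqv powr (q / (r - q)) * \<gamma> powr (r / (r - q))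
     = A * (L powr \<alpha> / (cqv * la powr (1 - \<alpha>))) * d powr sv"
proof (rule pos_eq_by_ln)
  have la: "la > 0" unfolding la_def using a A c g by simp
  show "0 < (L * la * d powr (r - q)) powr (sv / (r - q)) * (A powr (r - 1) / a powr r) powr (q / (r - q))
      * L powr (- q / (r - q)) * cqv powr (q / (r - q)) * \<gamma> powr (r / (r - q))"
    using L la d A a c g by simp
  show "0 < A * (L powr \<alpha> / (cqv * la powr (1 - \<alpha>))) * d powr sv" using L la d A c by simp
  have lla: "ln la = q * ln a - ln cqv - ln \<gamma> - (q - 1) * ln A"
    unfolding la_def using a A c g by (simp add: ln_div ln_mult ln_powr)
  have lhs: "ln ((L * la * d powr (r - q)) powr (sv / (r - q)) * (A powr (r - 1) / a powr r) powr (q / (r - q))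
      * L powr (- q / (r - q)) * cqv powr (q / (r - q)) * \<gamma> powr (r / (r - q)))
    = sv / (r - q) * (ln L + ln la + (r - q) * ln d) + q / (r - q) * ((r - 1) * ln A - r * ln a)
      - q / (r - q) * ln L + q / (r - q) * ln cqv + r / (r - q) * ln \<gamma>"
    using L la d A a c g by (simp add: ln_div ln_mult ln_powr)
  have rhs: "ln (A * (L powr \<alpha> / (cqv * la powr (1 - \<alpha>))) * d powr sv)
     = ln A + \<alpha> * ln L - ln cqv - (1 - \<alpha>) * ln la + sv * ln d"
    using L la d A a c g by (simp add: ln_div ln_mult ln_powr)
  have ne: "r - q \<noteq> 0" using e by simp
  show "ln ((L * la * d powr (r - q)) powr (sv / (r - q)) * (A powr (r - 1) / a powr r) powr (q / (r - q))
      * L powr (- q / (r - q)) * cqv powr (q / (r - q)) * \<gamma> powr (r / (r - q)))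
     = ln (A * (L powr \<alpha> / (cqv * la powr (1 - \<alpha>))) * d powr sv)"
  proof -
    have "sv / (r - q) * (ln L + ln la + (r - q) * ln d) + q / (r - q) * ((r - 1) * ln A - r * ln a)
      - q / (r - q) * ln L + q / (r - q) * ln cqv + r / (r - q) * ln \<gamma>
      = ln A + \<alpha> * ln L - ln cqv - (1 - \<alpha>) * ln la + sv * ln d"
    proof -
      define X where "X = ln L + ln la + (r - q) * ln d"
      define Y where "Y = (r - 1) * ln A - r * ln a"
      define R where "R = ln A + \<alpha> * ln L - ln cqv - (1 - \<alpha>) * ln la + sv * ln d"
      have num: "sv * X + q * Y - q * ln L + q * ln cqv + r * ln \<gamma> = (r - q) * R"
        unfolding X_def Y_def R_def lla sv_def by algebra
      have "sv / (r - q) * X + q / (r - q) * Y - q / (r - q) * ln L + q / (r - q) * ln cqv + r / (r - q) * ln \<gamma>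
          = (sv * X + q * Y - q * ln L + q * ln cqv + r * ln \<gamma>) / (r - q)"
        by (simp add: add_divide_distrib diff_divide_distrib)
      also have "\<dots> = R" unfolding num using ne by simp
      finally show ?thesis unfolding X_def Y_def R_def .
    qed
    then show ?thesis using lhs rhs by simp
  qed
qed

lemma tau_identity:
  fixes L la cqv \<theta> d \<alpha> r q :: real
  assumes L: "L > 0" and la: "la > 0" and c: "cqv > 0" and th: "\<theta> > 0" and d: "d > 0"
    and s: "s = \<alpha> * r + (1 - \<alpha>) * q" and s0: "s > 0"
  shows "(cqv * la) * (L powr \<alpha> / (cqv * la powr (1 - \<alpha>) * \<theta> powr \<alpha> * s)) * s * d powr (s - q)
     = (L * la * d powr (r - q) / \<theta>) powr \<alpha>"
proof (rule pos_eq_by_ln)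
  show "0 < (cqv * la) * (L powr \<alpha> / (cqv * la powr (1 - \<alpha>) * \<theta> powr \<alpha> * s)) * s * d powr (s - q)"
    using assms by simp
  show "0 < (L * la * d powr (r - q) / \<theta>) powr \<alpha>" using assms by simp
  have "ln ((cqv * la) * (L powr \<alpha> / (cqv * la powr (1 - \<alpha>) * \<theta> powr \<alpha> * s)) * s * d powr (s - q))
     = ln la + \<alpha> * ln L - (1 - \<alpha>) * ln la - \<alpha> * ln \<theta> + (s - q) * ln d"
    using assms by (simp add: ln_mult ln_div ln_powr)
  also have "\<dots> = \<alpha> * (ln L + ln la + (r - q) * ln d - ln \<theta>)" unfolding s by (simp add: algebra_simps)
  also have "\<dots> = ln ((L * la * d powr (r - q) / \<theta>) powr \<alpha>)"
    using assms by (simp add: ln_mult ln_div ln_powr)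
  finally show "ln ((cqv * la) * (L powr \<alpha> / (cqv * la powr (1 - \<alpha>) * \<theta> powr \<alpha> * s)) * s * d powr (s - q))
     = ln ((L * la * d powr (r - q) / \<theta>) powr \<alpha>)" .
qed

lemma scale_identity:
  fixes A a cqv \<gamma> q X :: real
  assumes A: "A > 0" and a: "a > 0" and c: "cqv > 0" and g: "\<gamma> > 0" and q: "q > 0"
  shows "A * ((a / A) powr q * X / (q * (cqv * (a powr q / (cqv * \<gamma> * A powr (q - 1)))))) = \<gamma> / q * X"
proof -
  have "A powr q = A powr (1 + (q - 1))" by simp
  also have "\<dots> = A powr 1 * A powr (q - 1)" by (rule powr_add)
  finally have "A * A powr (q - 1) = A powr q" using A by simp
  then show ?thesis using assms by (simp add: powr_divide field_simps)
qed

lemma step_gain: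
  fixes N :: "'a::euclidean_space \<Rightarrow> real" and lr :: "'a \<Rightarrow> real"
  assumes N: "is_norm N" and hd: "holder_derivs N p \<nu> L Dg g" and p: "p \<ge> 1" and nu: "0 \<le> \<nu>" and L: "L > 0"
    and pu: "unif_convex N q \<beta> (\<lambda>y. N y powr q / q)" and beta: "\<beta> > 0" and q: "2 \<le> q" "q < real p + \<nu>"
    and s: "s = \<alpha> * (real p + \<nu>) + (1 - \<alpha>) * q" and alpha: "0 \<le> \<alpha>" "\<alpha> \<le> 1"
    and th: "0 < \<theta>" "\<theta> < 1" and la: "la > 0"
    and M: "M = L powr \<alpha> / (cq \<beta> q * la powr (1 - \<alpha>) * \<theta> powr \<alpha> * s)"
    and conv: "\<And>x y t. x \<in> D \<Longrightarrow> y \<in> D \<Longrightarrow> 0 \<le> t \<Longrightarrow> t \<le> 1 \<Longrightarrow>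
       (1 - t) *\<^sub>R x + t *\<^sub>R y \<in> D \<and> lr ((1 - t) *\<^sub>R x + t *\<^sub>R y) \<le> (1 - t) * lr x + t * lr y"
    and xk: "xk \<in> D" and u: "u \<in> D"
    and opt: "\<And>y. y \<in> D \<Longrightarrow> taylor_model Dg p yh xk + M * N (xk - yh) powr s + lr xk
                 \<le> taylor_model Dg p yh y + M * N (y - yh) powr s + lr y"
    and om: "L * la * N (xk - yh) powr (real p + \<nu> - q) \<le> \<theta>"
  shows "(1 - \<theta> powr (q / (q - 1))) / q * (M * s * N (xk - yh) powr s)
     \<le> Dg 1 xk [u - xk] + lr u - lr xk + N (u - yh) powr q / (q * (cq \<beta> q * la))"
proof -
  have cq0: "cq \<beta> q > 0" unfolding cq_def using beta q by simp
  have sq: "q \<le> s"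
  proof -
    have "s - q = \<alpha> * (real p + \<nu> - q)" unfolding s by (simp add: algebra_simps)
    moreover have "\<alpha> * (real p + \<nu> - q) \<ge> 0" using alpha q by simp
    ultimately show ?thesis by simp
  qed
  have s0: "s > 0" using sq q by simp
  have M0: "M > 0" unfolding M using L cq0 la th s0 by simp
  have c0: "cq \<beta> q * la > 0" using cq0 la by simp
  show ?thesis
  proof (cases "N (xk - yh) = 0")
    case True
    have "0 \<le> Dg 1 xk [u - xk] + lr u - lr xk + N (u - yh) powr q / (q * (cq \<beta> q * la))"
      by (rule step_zero[OF N hd p nu L _ sq M0 c0 conv xk u opt True]) (use q in auto)
    then show ?thesis using True s0 by simp
  next
    case False
    then have d0: "N (xk - yh) > 0" using normN_basic(4)[OF N, of "xk - yh"] by simp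
    define \<omega> where "\<omega> = L * la * N (xk - yh) powr (real p + \<nu> - q)"
    have w0: "\<omega> \<ge> 0" unfolding \<omega>_def using L la by simp
    have tid: "(cq \<beta> q * la) * M * s * N (xk - yh) powr (s - q) = (\<omega> / \<theta>) powr \<alpha>"
      unfolding M \<omega>_def by (rule tau_identity[OF L la cq0 th(1) d0 s s0])
    have r1: "\<omega> / \<theta> \<le> 1" using om th unfolding \<omega>_def by simp
    have r0: "\<omega> / \<theta> \<ge> 0" using w0 th by simp
    have tau: "(cq \<beta> q * la) * M * s * N (xk - yh) powr (s - q) \<le> 1"
      unfolding tid using r0 r1 alpha by (intro powr_le1) auto
    have "\<omega> / \<theta> \<le> (\<omega> / \<theta>) powr \<alpha>"
    proof -
      have "(\<omega> / \<theta>) powr 1 \<le> (\<omega> / \<theta>) powr \<alpha>" using r0 r1 alpha by (intro powr_mono') auto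
      then show ?thesis using r0 w0 th by (simp add: abs_of_nonneg)
    qed
    then have "\<omega> \<le> \<theta> * (\<omega> / \<theta>) powr \<alpha>" using th by (simp add: field_simps)
    then have "cq \<beta> q * \<omega> \<le> cq \<beta> q * (\<theta> * (\<omega> / \<theta>) powr \<alpha>)" using cq0 by simp
    then have err: "L * N (xk - yh) powr (real p + \<nu> - q) * (cq \<beta> q * la)
        \<le> cq \<beta> q * \<theta> * ((cq \<beta> q * la) * M * s * N (xk - yh) powr (s - q))"
      unfolding tid unfolding \<omega>_def by (simp add: algebra_simps)
    show ?thesis
      by (rule step_pos[OF N hd p nu L pu beta q(1) sq M0 c0 th conv xk u opt d0 tau err])
  qed
qed

theorem mainTheorem11:
  fixes N :: "'a::euclidean_space \<Rightarrow> real"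
    and g :: "'a \<Rightarrow> real" and l :: "'a \<Rightarrow> ereal"
    and Dg :: "nat \<Rightarrow> 'a \<Rightarrow> 'a list \<Rightarrow> real"
    and h :: "'a \<Rightarrow> real"
    and p :: nat and \<nu> L q \<beta> \<gamma> \<alpha> \<theta>2 :: real
    and a :: "nat \<Rightarrow> real" and x z :: "nat \<Rightarrow> 'a" and x0 xs :: 'a
  assumes norm: "is_norm N"
    and p: "p \<ge> 1" and nu: "0 \<le> \<nu>" "\<nu> \<le> 1" and L: "L > 0"
    and g_convex: "convex_on UNIV g"
    and g_holder: "holder_derivs N p \<nu> L Dg g"
    and l_pcc: "proper_closed_convex l"
    and xs_min: "\<And>y. ereal (g xs) + l xs \<le> ereal (g y) + l y"
    and beta: "\<beta> > 0" and gamma: "\<gamma> > 0"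
    and pow_uc: "unif_convex N q \<beta> (\<lambda>y. N y powr q / q)"
    and x0: "l x0 \<noteq> \<infinity>"
    and h_convex: "convex_on UNIV h"
    and h_nonneg: "\<And>y. h y \<ge> 0"
    and h_zero: "\<And>y. h y = 0 \<longleftrightarrow> y = x0"
    and h_uc: "unif_convex N q \<gamma> h"
    and alpha: "0 \<le> \<alpha>" "\<alpha> \<le> 1"
    and a_pos: "\<And>i. i \<ge> 1 \<Longrightarrow> a i > 0"
    and q: "2 \<le> q" "q < real p + \<nu>"
    and theta: "0 < \<theta>2" "\<theta>2 < 1"
    and x_init: "x 0 = x0" and z_init: "z 0 = x0"
    and x_min: "\<And>i y. i \<ge> 1 \<Longrightarrow>
       ereal (taylor_model Dg p (xhat a x z (i - 1)) (x i)
         + L powr \<alpha> / (cq \<beta> q * lam q \<gamma> \<beta> a i powr (1 - \<alpha>) * \<theta>2 powr \<alpha> * varsigma \<alpha> p \<nu> q)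
           * N (x i - xhat a x z (i - 1)) powr varsigma \<alpha> p \<nu> q) + l (x i)
       \<le> ereal (taylor_model Dg p (xhat a x z (i - 1)) y
         + L powr \<alpha> / (cq \<beta> q * lam q \<gamma> \<beta> a i powr (1 - \<alpha>) * \<theta>2 powr \<alpha> * varsigma \<alpha> p \<nu> q)
           * N (y - xhat a x z (i - 1)) powr varsigma \<alpha> p \<nu> q) + l y"
    and z_min: "\<And>i y. i \<ge> 1 \<Longrightarrow>
       (\<Sum>j=1..i. ereal (a j) * (ereal (g (x j) + Dg 1 (x j) [z i - x j]) + l (z i))) + ereal (h (z i))
       \<le> (\<Sum>j=1..i. ereal (a j) * (ereal (g (x j) + Dg 1 (x j) [y - x j]) + l y)) + ereal (h y)"
    and omega: "\<And>i. i \<ge> 1 \<Longrightarrow>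
       L * lam q \<gamma> \<beta> a i * N (x i - xhat a x z (i - 1)) powr (real p + \<nu> - q) \<le> \<theta>2"
    and k: "k \<ge> 1"
  shows "(\<Sum>i=1..k. (L * lam q \<gamma> \<beta> a i * N (x i - xhat a x z (i - 1)) powr (real p + \<nu> - q))
              powr (varsigma \<alpha> p \<nu> q / (real p + \<nu> - q))
            * (accA a i powr (real p + \<nu> - 1) / (accA a i - accA a (i - 1)) powr (real p + \<nu>))
              powr (q / (real p + \<nu> - q)))
         \<le> q * \<theta>2 powr \<alpha> * inverse (1 - \<theta>2 powr (q / (q - 1)))
             * \<gamma> powr (- (real p + \<nu>) / (real p + \<nu> - q))
             * (L / cq \<beta> q) powr (q / (real p + \<nu> - q)) * h xs"
proof -
  define D where "D = {y. l y \<noteq> \<infinity>}"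
  define lr where "lr y = real_of_ereal (l y)" for y
  define A where "A = accA a"
  define xh where "xh = xhat a x z"
  define sv where "sv = varsigma \<alpha> p \<nu> q"
  define la where "la i = lam q \<gamma> \<beta> a i" for i
  define Mk where "Mk i = L powr \<alpha> / (cq \<beta> q * la i powr (1 - \<alpha>) * \<theta>2 powr \<alpha> * sv)" for i
  define T where "T = \<theta>2 powr (q / (q - 1))"
  define gain where "gain i = (1 - T) / q * (Mk i * sv * N (x i - xh (i - 1)) powr sv)" for i
  define \<Psi> where "\<Psi> k y = (\<Sum>j=1..k. a j * (g (x j) + Dg 1 (x j) [y - x j] + lr y))" for k y
  define B where "B k = (\<Sum>i=1..k. A i * gain i)" for k
  have nm: "\<And>y. l y \<noteq> -\<infinity>" using l_pcc unfolding proper_closed_convex_def by blast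
  have lrD: "\<And>y. y \<in> D \<Longrightarrow> l y = ereal (lr y)"
    unfolding D_def lr_def using nm by (case_tac "l y") auto
  have convD: "\<And>u v t. u \<in> D \<Longrightarrow> v \<in> D \<Longrightarrow> 0 \<le> t \<Longrightarrow> t \<le> 1 \<Longrightarrow>
       (1 - t) *\<^sub>R u + t *\<^sub>R v \<in> D \<and> lr ((1 - t) *\<^sub>R u + t *\<^sub>R v) \<le> (1 - t) * lr u + t * lr v"
    unfolding D_def lr_def using l_conv[OF l_pcc] by blast
  have x0D: "x0 \<in> D" unfolding D_def using x0 by simp
  have A0: "A 0 = 0" unfolding A_def accA_def by simp
  have AS: "\<And>j. A (Suc j) = A j + a (Suc j)" unfolding A_def accA_def by simp
  have Apos: "\<And>i. i \<ge> 1 \<Longrightarrow> A i > 0" unfolding A_def accA_def using a_pos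
    by (intro sum_pos) auto
  have Ann: "\<And>i. A i \<ge> 0" using Apos A0 by (metis less_eq_real_def less_one not_le)
  have cq0: "cq \<beta> q > 0" unfolding cq_def using beta q by simp
  have la_eq: "\<And>i. la i = a i powr q / (cq \<beta> q * \<gamma> * A i powr (q - 1))"
    unfolding la_def lam_def A_def by simp
  have la_pos: "\<And>i. i \<ge> 1 \<Longrightarrow> la i > 0"
  proof -
    fix i :: nat assume i: "i \<ge> 1"
    show "la i > 0" unfolding la_eq using a_pos[OF i] Apos[OF i] cq0 gamma by simp
  qed
  have sv_eq: "sv = \<alpha> * (real p + \<nu>) + (1 - \<alpha>) * q" unfolding sv_def varsigma_def by simp
  have sv0: "sv > 0"
  proof -
    have "sv - q = \<alpha> * (real p + \<nu> - q)" unfolding sv_eq by (simp add: algebra_simps)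
    moreover have "\<alpha> * (real p + \<nu> - q) \<ge> 0" using alpha q by simp
    ultimately show ?thesis using q by simp
  qed
  have xopt_e: "\<And>i y. i \<ge> 1 \<Longrightarrow>
       ereal (taylor_model Dg p (xh (i - 1)) (x i) + Mk i * N (x i - xh (i - 1)) powr sv) + l (x i)
       \<le> ereal (taylor_model Dg p (xh (i - 1)) y + Mk i * N (y - xh (i - 1)) powr sv) + l y"
    using x_min unfolding Mk_def la_def sv_def xh_def by simp
  have xD: "\<And>i. x i \<in> D"
  proof -
    fix i :: nat show "x i \<in> D"
    proof (cases "i \<ge> 1")
      case True
      show ?thesis
      proof (rule ccontr)
        assume "x i \<notin> D"
        then have "l (x i) = \<infinity>" unfolding D_def by simp
        then show False using xopt_e[OF True, of x0] x0D lrD[OF x0D] by simp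
      qed
    next
      case False then have "i = 0" by simp
      then show ?thesis using x_init x0D by simp
    qed
  qed
  have xopt: "\<And>i y. i \<ge> 1 \<Longrightarrow> y \<in> D \<Longrightarrow>
       taylor_model Dg p (xh (i - 1)) (x i) + Mk i * N (x i - xh (i - 1)) powr sv + lr (x i)
       \<le> taylor_model Dg p (xh (i - 1)) y + Mk i * N (y - xh (i - 1)) powr sv + lr y"
  proof -
    fix i :: nat and y assume i: "i \<ge> 1" and y: "y \<in> D"
    show "taylor_model Dg p (xh (i - 1)) (x i) + Mk i * N (x i - xh (i - 1)) powr sv + lr (x i)
       \<le> taylor_model Dg p (xh (i - 1)) y + Mk i * N (y - xh (i - 1)) powr sv + lr y"
      using xopt_e[OF i, of y] lrD[OF y] lrD[OF xD[of i]] by simp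
  qed
  have zopt_e: "\<And>i y. i \<ge> 1 \<Longrightarrow>
       (\<Sum>j=1..i. ereal (a j) * (ereal (g (x j) + Dg 1 (x j) [z i - x j]) + l (z i))) + ereal (h (z i))
       \<le> (\<Sum>j=1..i. ereal (a j) * (ereal (g (x j) + Dg 1 (x j) [y - x j]) + l y)) + ereal (h y)"
    by (rule z_min)
  have zD: "\<And>i. z i \<in> D"
  proof -
    fix i :: nat show "z i \<in> D"
    proof (cases "i \<ge> 1")
      case True
      show ?thesis
      proof (rule ccontr)
        assume "z i \<notin> D"
        then have li: "l (z i) = \<infinity>" unfolding D_def by simp
        have "(\<Sum>j=1..i. ereal (a j) * (ereal (g (x j) + Dg 1 (x j) [z i - x j]) + l (z i))) = \<infinity>"
          unfolding li by (rule ereal_sum_inf) (use True a_pos in auto)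
        then show False using zopt_e[OF True, of x0] lrD[OF x0D] by simp
      qed
    next
      case False then have "i = 0" by simp
      then show ?thesis using z_init x0D by simp
    qed
  qed
  have zopt: "\<And>i y. y \<in> D \<Longrightarrow> \<Psi> i (z i) + h (z i) \<le> \<Psi> i y + h y"
  proof -
    fix i :: nat and y assume y: "y \<in> D"
    show "\<Psi> i (z i) + h (z i) \<le> \<Psi> i y + h y"
    proof (cases "i \<ge> 1")
      case True
      have e1: "(\<Sum>j=1..i. ereal (a j) * (ereal (g (x j) + Dg 1 (x j) [z i - x j]) + l (z i))) = ereal (\<Psi> i (z i))"
        unfolding \<Psi>_def lrD[OF zD[of i]] by (simp add: algebra_simps)
      have e2: "(\<Sum>j=1..i. ereal (a j) * (ereal (g (x j) + Dg 1 (x j) [y - x j]) + l y)) = ereal (\<Psi> i y)"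
        unfolding \<Psi>_def lrD[OF y] by (simp add: algebra_simps)
      show ?thesis using zopt_e[OF True, of y] unfolding e1 e2 by simp
    next
      case False
      then have "i = 0" by simp
      then show ?thesis unfolding \<Psi>_def using z_init h_zero[of x0] h_nonneg[of y] by simp
    qed
  qed
  have lin1: "\<And>y. linear (\<lambda>v. Dg 1 y [v])"
    using multilinear_slot[OF hd_facts(2)[OF g_holder, of 1], of "[]" "[]"] p by simp
  have \<Psi>conv: "\<And>k u v t. u \<in> D \<Longrightarrow> v \<in> D \<Longrightarrow> 0 \<le> t \<Longrightarrow> t \<le> 1 \<Longrightarrow>
       (1 - t) *\<^sub>R u + t *\<^sub>R v \<in> D \<and> \<Psi> k ((1 - t) *\<^sub>R u + t *\<^sub>R v) \<le> (1 - t) * \<Psi> k u + t * \<Psi> k v"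
  proof -
    fix k :: nat and u v and t :: real assume u: "u \<in> D" and v: "v \<in> D" and t: "0 \<le> t" "t \<le> 1"
    have "\<Psi> k ((1 - t) *\<^sub>R u + t *\<^sub>R v) \<le> (1 - t) * \<Psi> k u + t * \<Psi> k v"
      unfolding \<Psi>_def
      by (rule affsum_conv[of "{1..k}" "\<lambda>j v. Dg 1 (x j) [v]" a, OF lin1 _ _ t])
         (use a_pos convD[OF u v t] in \<open>auto intro: less_imp_le\<close>)
    then show "(1 - t) *\<^sub>R u + t *\<^sub>R v \<in> D \<and> \<Psi> k ((1 - t) *\<^sub>R u + t *\<^sub>R v) \<le> (1 - t) * \<Psi> k u + t * \<Psi> k v"
      using convD[OF u v t] by blast
  qed
  have gder: "\<And>y. (g has_derivative (\<lambda>h. Dg 1 y [h])) (at y)"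
  proof -
    fix y
    have "((\<lambda>w. Dg 0 w []) has_derivative (\<lambda>h. Dg (Suc 0) y (h # []))) (at y)"
      using hd_facts(3)[OF g_holder, of 0 "[]" y] p by simp
    moreover have "(\<lambda>w. Dg 0 w []) = g" using hd_facts(1)[OF g_holder] by auto
    ultimately show "(g has_derivative (\<lambda>h. Dg 1 y [h])) (at y)" by simp
  qed
  have grad: "\<And>u y. g y \<ge> g u + Dg 1 u [y - u]" using grad_ineq[OF g_convex gder] .
  have stepk: "\<And>k u. k \<ge> 1 \<Longrightarrow> u \<in> D \<Longrightarrow>
      gain k \<le> Dg 1 (x k) [u - x k] + lr u - lr (x k) + N (u - xh (k - 1)) powr q / (q * (cq \<beta> q * la k))"
  proof -
    fix k :: nat and u assume k: "k \<ge> 1" and u: "u \<in> D"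
    have om: "L * la k * N (x k - xh (k - 1)) powr (real p + \<nu> - q) \<le> \<theta>2"
      using omega[OF k] unfolding la_def xh_def .
    show "gain k \<le> Dg 1 (x k) [u - x k] + lr u - lr (x k) + N (u - xh (k - 1)) powr q / (q * (cq \<beta> q * la k))"
      unfolding gain_def T_def
      by (rule step_gain[OF norm g_holder p nu(1) L pow_uc beta q sv_eq alpha theta la_pos[OF k]
            Mk_def convD xD u xopt[OF k] om])
  qed
  have inv: "A k' * (g (x k') + lr (x k')) + B k' \<le> \<Psi> k' (z k') + h (z k')" for k'
  proof (induction k')
    case 0
    then show ?case unfolding A0 B_def \<Psi>_def using z_init h_zero[of x0] by simp
  next
    case (Suc j)
    define k where "k = Suc j"
    define y where "y = z k"
    define ak where "ak = a k"
    define Ak where "Ak = A k"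
    define t where "t = ak / Ak"
    define xk where "xk = x k"
    have ak0: "ak > 0" unfolding ak_def k_def using a_pos by simp
    have Ak: "Ak = A j + ak" unfolding Ak_def ak_def k_def by (rule AS)
    have Ak0: "Ak > 0" unfolding Ak_def k_def using Apos by simp
    have Aj0: "A j \<ge> 0" by (rule Ann)
    have t01: "0 \<le> t" "t \<le> 1" unfolding t_def using ak0 Ak0 Ak Aj0 by auto
    have t1: "1 - t = A j / Ak" unfolding t_def using Ak Ak0 by (simp add: field_simps)
    have yD: "y \<in> D" unfolding y_def by (rule zD)
    have gr: "\<Psi> j (z j) + h (z j) + \<gamma> / q * N (y - z j) powr q \<le> \<Psi> j y + h y"
      by (rule min_growth[OF norm _ h_convex h_uc \<Psi>conv zD zopt yD]) (use q in auto)
    have \<Psi>S: "\<Psi> k y = \<Psi> j y + ak * (g xk + Dg 1 xk [y - xk] + lr y)"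
      unfolding \<Psi>_def k_def ak_def xk_def by simp
    define u where "u = (1 - t) *\<^sub>R x j + t *\<^sub>R y"
    have uD: "u \<in> D" and lru: "lr u \<le> (1 - t) * lr (x j) + t * lr y"
      using convD[OF xD yD t01] unfolding u_def by auto
    have xhj0: "xh j = (ak / Ak) *\<^sub>R z j + (A j / Ak) *\<^sub>R x j"
      unfolding xh_def xhat_def ak_def Ak_def k_def A_def by simp
    have e1: "Ak * (1 - t) = A j" using t1 Ak0 by simp
    have e2: "Ak * t = ak" unfolding t_def using Ak0 by simp
    have xhj: "xh j = t *\<^sub>R z j + (1 - t) *\<^sub>R x j" using t1 unfolding xhj0 t_def by simp
    have uxh: "u - xh j = t *\<^sub>R (y - z j)" unfolding u_def xhj by (simp add: algebra_simps)
    have Nu: "N (u - xh j) = t * N (y - z j)" unfolding uxh using normN_basic(5)[OF norm] t01 by simp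
    have lak: "la k = ak powr q / (cq \<beta> q * \<gamma> * Ak powr (q - 1))" unfolding la_eq ak_def Ak_def ..
    have scale: "Ak * (N (u - xh j) powr q / (q * (cq \<beta> q * la k))) = \<gamma> / q * N (y - z j) powr q"
    proof -
      have "N (u - xh j) powr q = ((ak / Ak) * N (y - z j)) powr q" unfolding Nu t_def ..
      also have "\<dots> = (ak / Ak) powr q * N (y - z j) powr q"
      proof -
        have nn: "0 \<le> ak / Ak" "0 \<le> N (y - z j)" using ak0 Ak0 normN_basic(4)[OF norm] by auto
        show ?thesis by (rule powr_mult)
      qed
      finally have "N (u - xh j) powr q = (ak / Ak) powr q * N (y - z j) powr q" .
      then show ?thesis unfolding lak using scale_identity[OF Ak0 ak0 cq0 gamma, of q "N (y - z j) powr q"] q by simp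
    qed
    have ulin: "u - xk = (1 - t) *\<^sub>R (x j - xk) + t *\<^sub>R (y - xk)" unfolding u_def by (simp add: algebra_simps)
    have Dlin: "Dg 1 xk [u - xk] = (1 - t) * Dg 1 xk [x j - xk] + t * Dg 1 xk [y - xk]"
      unfolding ulin using linear_add[OF lin1] linear_cmul[OF lin1] by simp
    have c1: "Ak * Dg 1 xk [u - xk] = A j * Dg 1 xk [x j - xk] + ak * Dg 1 xk [y - xk]"
    proof -
      have "Ak * ((1 - t) * Dg 1 xk [x j - xk] + t * Dg 1 xk [y - xk]) = (Ak * (1 - t)) * Dg 1 xk [x j - xk] + (Ak * t) * Dg 1 xk [y - xk]"
        by (simp add: algebra_simps)
      then show ?thesis unfolding Dlin e1 e2 .
    qed
    have c2: "Ak * lr u \<le> A j * lr (x j) + ak * lr y"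
    proof -
      have "Ak * lr u \<le> Ak * ((1 - t) * lr (x j) + t * lr y)" using lru Ak0 by (intro mult_left_mono) auto
      also have "\<dots> = (Ak * (1 - t)) * lr (x j) + (Ak * t) * lr y" by (simp add: algebra_simps)
      also have "\<dots> = A j * lr (x j) + ak * lr y" unfolding e1 e2 ..
      finally show ?thesis .
    qed
    have st: "gain k \<le> Dg 1 xk [u - xk] + lr u - lr xk + N (u - xh j) powr q / (q * (cq \<beta> q * la k))"
      using stepk[of k u] uD unfolding k_def xk_def by simp
    have c3: "Ak * gain k \<le> Ak * Dg 1 xk [u - xk] + Ak * lr u - Ak * lr xk + Ak * (N (u - xh j) powr q / (q * (cq \<beta> q * la k)))"
    proof -
      have "Ak * gain k \<le> Ak * (Dg 1 xk [u - xk] + lr u - lr xk + N (u - xh j) powr q / (q * (cq \<beta> q * la k)))"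
        using st Ak0 by (intro mult_left_mono) auto
      then show ?thesis by (simp add: algebra_simps)
    qed
    have c4: "A j * g (x j) \<ge> A j * g xk + A j * Dg 1 xk [x j - xk]"
    proof -
      have "A j * g (x j) \<ge> A j * (g xk + Dg 1 xk [x j - xk])" using grad[of xk "x j"] Aj0 by (intro mult_left_mono) auto
      then show ?thesis by (simp add: algebra_simps)
    qed
    have c5: "Ak * (g xk + lr xk) = A j * g xk + ak * g xk + Ak * lr xk" unfolding Ak by (simp add: algebra_simps)
    have c6: "A j * (g (x j) + lr (x j)) = A j * g (x j) + A j * lr (x j)" by (simp add: algebra_simps)
    have c7: "ak * (g xk + Dg 1 xk [y - xk] + lr y) = ak * g xk + ak * Dg 1 xk [y - xk] + ak * lr y"
      by (simp add: algebra_simps)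
    have BS: "B k = B j + Ak * gain k" unfolding B_def k_def Ak_def by simp
    have "Ak * (g xk + lr xk) + B k \<le> \<Psi> k y + h y"
      using Suc.IH gr \<Psi>S scale c1 c2 c3 c4 c5 c6 c7 BS by linarith
    then show ?case unfolding k_def Ak_def xk_def y_def by simp
  qed
  have xsD: "xs \<in> D"
  proof (rule ccontr)
    assume "xs \<notin> D"
    then have "l xs = \<infinity>" unfolding D_def by simp
    then show False using xs_min[of x0] lrD[OF x0D] by simp
  qed
  have fin1: "\<Psi> k (z k) + h (z k) \<le> \<Psi> k xs + h xs" by (rule zopt[OF xsD])
  have fin2: "\<Psi> k xs \<le> A k * (g xs + lr xs)"
  proof -
    have "\<Psi> k xs \<le> (\<Sum>j=1..k. a j * (g xs + lr xs))"
      unfolding \<Psi>_def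
    proof (rule sum_mono)
      fix j assume "j \<in> {1..k}"
      then have "a j > 0" using a_pos by simp
      then show "a j * (g (x j) + Dg 1 (x j) [xs - x j] + lr xs) \<le> a j * (g xs + lr xs)"
        using grad[of "x j" xs] by (intro mult_left_mono) auto
    qed
    also have "\<dots> = A k * (g xs + lr xs)" unfolding A_def accA_def by (simp add: sum_distrib_right)
    finally show ?thesis .
  qed
  have fin3: "g xs + lr xs \<le> g (x k) + lr (x k)"
    using xs_min[of "x k"] lrD[OF xsD] lrD[OF xD[of k]] by simp
  have fin4: "A k * (g xs + lr xs) \<le> A k * (g (x k) + lr (x k))" using fin3 Ann by (intro mult_left_mono) auto
  have Bk: "B k \<le> h xs" using inv[of k] fin1 fin2 fin4 by linarith
  define e where "e = real p + \<nu> - q"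
  have e0: "e > 0" unfolding e_def using q by simp
  have T1: "T < 1"
  proof -
    have "T < 1 powr (q / (q - 1))" unfolding T_def using theta q by (intro powr_less_mono2) auto
    then show ?thesis by simp
  qed
  define K where "K = (1 - T) / (q * \<theta>2 powr \<alpha>) * L powr (- q / e) * cq \<beta> q powr (q / e) * \<gamma> powr ((real p + \<nu>) / e)"
  have K0: "K > 0" unfolding K_def using T1 q theta L cq0 gamma by simp
  have termK: "(L * lam q \<gamma> \<beta> a i * N (x i - xhat a x z (i - 1)) powr (real p + \<nu> - q))
              powr (varsigma \<alpha> p \<nu> q / (real p + \<nu> - q))
            * (accA a i powr (real p + \<nu> - 1) / (accA a i - accA a (i - 1)) powr (real p + \<nu>))
              powr (q / (real p + \<nu> - q)) * K = A i * gain i" if i: "i \<in> {1..k}" for i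
  proof -
    have i1: "i \<ge> 1" using i by simp
    have ai: "accA a i - accA a (i - 1) = a i" using AS[of "i - 1"] i1 unfolding A_def by simp
    show ?thesis
    proof (cases "N (x i - xh (i - 1)) = 0")
      case True
      have "N (x i - xhat a x z (i - 1)) powr (real p + \<nu> - q) = 0" using True unfolding xh_def by simp
      then show ?thesis unfolding gain_def using True sv0 by simp
    next
      case False
      then have d0: "N (x i - xh (i - 1)) > 0" using normN_basic(4)[OF norm, of "x i - xh (i - 1)"] by simp
      have ti: "(L * la i * N (x i - xh (i - 1)) powr (real p + \<nu> - q)) powr (sv / (real p + \<nu> - q))
          * (A i powr (real p + \<nu> - 1) / a i powr (real p + \<nu>)) powr (q / (real p + \<nu> - q))
          * L powr (- q / (real p + \<nu> - q)) * cq \<beta> q powr (q / (real p + \<nu> - q)) * \<gamma> powr ((real p + \<nu>) / (real p + \<nu> - q))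
         = A i * (L powr \<alpha> / (cq \<beta> q * la i powr (1 - \<alpha>))) * N (x i - xh (i - 1)) powr sv"
        unfolding la_eq sv_eq
        by (rule term_identity[OF L a_pos[OF i1] Apos[OF i1] cq0 gamma d0]) (use q in simp)
      have "A i * gain i = (1 - T) / (q * \<theta>2 powr \<alpha>) * (A i * (L powr \<alpha> / (cq \<beta> q * la i powr (1 - \<alpha>))) * N (x i - xh (i - 1)) powr sv)"
        unfolding gain_def Mk_def using sv0 theta q by (simp add: field_simps)
      also have "\<dots> = (1 - T) / (q * \<theta>2 powr \<alpha>) * ((L * la i * N (x i - xh (i - 1)) powr (real p + \<nu> - q)) powr (sv / (real p + \<nu> - q))
          * (A i powr (real p + \<nu> - 1) / a i powr (real p + \<nu>)) powr (q / (real p + \<nu> - q))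
          * L powr (- q / (real p + \<nu> - q)) * cq \<beta> q powr (q / (real p + \<nu> - q)) * \<gamma> powr ((real p + \<nu>) / (real p + \<nu> - q)))"
        unfolding ti ..
      finally show ?thesis unfolding K_def e_def la_def xh_def sv_def A_def ai by (simp add: algebra_simps)
    qed
  qed
  have "(\<Sum>i=1..k. (L * lam q \<gamma> \<beta> a i * N (x i - xhat a x z (i - 1)) powr (real p + \<nu> - q))
              powr (varsigma \<alpha> p \<nu> q / (real p + \<nu> - q))
            * (accA a i powr (real p + \<nu> - 1) / (accA a i - accA a (i - 1)) powr (real p + \<nu>))
              powr (q / (real p + \<nu> - q))) = (\<Sum>i=1..k. A i * gain i / K)"
    using termK K0 by (intro sum.cong refl) (simp add: field_simps)
  also have "\<dots> = B k / K" unfolding B_def by (simp add: sum_divide_distrib)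
  also have "\<dots> \<le> h xs / K" using Bk K0 by (simp add: divide_right_mono)
  also have "h xs / K = q * \<theta>2 powr \<alpha> * inverse (1 - \<theta>2 powr (q / (q - 1)))
             * \<gamma> powr (- (real p + \<nu>) / (real p + \<nu> - q))
             * (L / cq \<beta> q) powr (q / (real p + \<nu> - q)) * h xs"
  proof -
    have g1: "\<gamma> powr (- (real p + \<nu>) / (real p + \<nu> - q)) * \<gamma> powr ((real p + \<nu>) / (real p + \<nu> - q)) = 1"
      using gamma by (simp add: powr_add[symmetric] add_divide_distrib[symmetric])
    have l1: "L powr (- q / (real p + \<nu> - q)) * L powr (q / (real p + \<nu> - q)) = 1"
      using L by (simp add: powr_add[symmetric] add_divide_distrib[symmetric])
    show ?thesis
      unfolding K_def T_def e_def using T1 theta q L cq0 gamma g1 l1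
      by (simp add: powr_divide divide_simps T_def) (simp add: algebra_simps)
  qed
  finally show ?thesis .
qed

end
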